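(* (Kesten's lemma for repelling polymers.) Let $\Omega$ be a finite subset of $\mathbb{Z}^d\setminus\{0\}$ invariant under all symmetries of $\mathbb{Z}^d$, let $\phi:\mathbb{Z}_{\ge 0}\to[0,\infty)$ satisfy $\phi(0)=\phi(1)=0$ and $\phi(a+b)\ge\phi(a)+\phi(b)$, and let $\rho$ be a probability mass function on $\Omega$ invariant under all symmetries of $\mathbb{Z}^d$. Then $$\sum_{\gamma\in\mathrm{iB}}e^{-\lambda_0|\gamma|}\sigma(\gamma)=1.$$
   Context: A walk of length $n$ is a sequence $\gamma=(\gamma(i))_{i=0}^n$ in $\mathbb{Z}^d$ with $\gamma(i)-\gamma(i-1)\in\Omega$; $|\gamma|=n$; $\mathrm{W}_n$ is the set of such walks with $\gamma(0)=0$. With $l_v(\gamma)=\#\{k:\gamma(k)=v\}$, $\sigma(\gamma)=\prod_{v}e^{-\phi(l_v(\gamma))}\prod_{i=1}^n\rho(\gamma(i)-\gamma(i-1))$, $Z_n=\sum_{\gamma\in\mathrm{W}_n}\sigma(\gamma)$ and $\lambda_0=\lim_n\tfrac1n\log Z_n$ (which exists). $x(v)$ is the first coordinate of $v$. A bridge of length $n\ge1$ is $\gamma\in\mathrm{W}_n$ with $x(\gamma(0))<x(\gamma(i))\le x(\gamma(n))$ for $1\le i\le n$. An integer $i\in\{1,\dots,n-1\}$ is a renewal time of a bridge $\gamma$ of length $n$ if $x(\gamma(i))<x(\gamma(k))$ for all $k>i$ and $x(\gamma(i))\ge x(\gamma(k))$ for all $k<i$. A bridge is irreducible if it has no renewal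 time; $\mathrm{iB}$ is the set of irreducible bridges of all lengths $n\ge1$. *)

theory Defs
  imports "HOL-Analysis.Analysis"
begin

text \<open>Points of Z^d are represented as functions nat => int that vanish outside {..<d}.
  Coordinate 0 is the "first coordinate" x(v).\<close>

type_synonym pt = "nat \<Rightarrow> int"

definition in_Zd :: "nat \<Rightarrow> pt \<Rightarrow> bool" where
  "in_Zd d v \<longleftrightarrow> (\<forall>i\<ge>d. v i = 0)"

definition sym_Zd :: "nat \<Rightarrow> (pt \<Rightarrow> pt) \<Rightarrow> bool" where
  "sym_Zd d g \<longleftrightarrow> (\<exists>\<pi> s. bij_betw \<pi> {..<d} {..<d} \<and> (\<forall>i. s i \<in> {1, -1::int}) \<and>
      g = (\<lambda>v i. if i < d then s i * v (\<pi> i) else 0))"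

definition xc :: "pt \<Rightarrow> int" where
  "xc v = v 0"

text \<open>A walk of length n is a list of n+1 points.\<close>
definition origin :: pt where "origin = (\<lambda>_. 0)"

definition step :: "pt \<Rightarrow> pt \<Rightarrow> pt" where
  "step u v = (\<lambda>i. v i - u i)"

definition wlen :: "pt list \<Rightarrow> nat" where
  "wlen \<gamma> = length \<gamma> - 1"

definition walks :: "pt set \<Rightarrow> nat \<Rightarrow> pt list set" where
  "walks \<Omega> n = {\<gamma>. length \<gamma> = Suc n \<and> \<gamma> ! 0 = origin \<and>
      (\<forall>i\<in>{1..n}. step (\<gamma> ! (i - 1)) (\<gamma> ! i) \<in> \<Omega>)}"

definition visits :: "pt list \<Rightarrow> pt \<Rightarrow> nat" where
  "visits \<gamma> v = length (filter (\<lambda>u. u = v) \<gamma>)"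

text \<open>sigma(gamma); vertices not visited contribute exp(-phi 0) = 1 and are omitted.\<close>
definition sigma :: "(pt \<Rightarrow> real) \<Rightarrow> (nat \<Rightarrow> real) \<Rightarrow> pt list \<Rightarrow> real" where
  "sigma \<rho> \<phi> \<gamma> = (\<Prod>v\<in>set \<gamma>. exp (- \<phi> (visits \<gamma> v))) *
      (\<Prod>i\<in>{1..wlen \<gamma>}. \<rho> (step (\<gamma> ! (i - 1)) (\<gamma> ! i)))"

definition Zn :: "pt set \<Rightarrow> (pt \<Rightarrow> real) \<Rightarrow> (nat \<Rightarrow> real) \<Rightarrow> nat \<Rightarrow> real" where
  "Zn \<Omega> \<rho> \<phi> n = (\<Sum>\<gamma>\<in>walks \<Omega> n. sigma \<rho> \<phi> \<gamma>)"

definition lambda0 :: "pt set \<Rightarrow> (pt \<Rightarrow> real) \<Rightarrow> (nat \<Rightarrow> real) \<Rightarrow> real" where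
  "lambda0 \<Omega> \<rho> \<phi> = lim (\<lambda>n. ln (Zn \<Omega> \<rho> \<phi> n) / real n)"

definition bridge :: "pt set \<Rightarrow> nat \<Rightarrow> pt list \<Rightarrow> bool" where
  "bridge \<Omega> n \<gamma> \<longleftrightarrow> n \<ge> 1 \<and> \<gamma> \<in> walks \<Omega> n \<and>
      (\<forall>i\<in>{1..n}. xc (\<gamma> ! 0) < xc (\<gamma> ! i) \<and> xc (\<gamma> ! i) \<le> xc (\<gamma> ! n))"

definition renewal_time :: "pt list \<Rightarrow> nat \<Rightarrow> bool" where
  "renewal_time \<gamma> i \<longleftrightarrow> i \<in> {1..<wlen \<gamma>} \<and>
      (\<forall>k\<in>{i<..wlen \<gamma>}. xc (\<gamma> ! i) < xc (\<gamma> ! k)) \<and>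
      (\<forall>k<i. xc (\<gamma> ! i) \<ge> xc (\<gamma> ! k))"

definition irreducible_bridges :: "pt set \<Rightarrow> pt list set" where
  "irreducible_bridges \<Omega> = {\<gamma>. \<exists>n\<ge>1. bridge \<Omega> n \<gamma> \<and> \<not> (\<exists>i. renewal_time \<gamma> i)}"

end

theory Submission
  imports Defs
begin

fun pth :: "pt set \<Rightarrow> pt list \<Rightarrow> bool" where
  "pth \<Omega> (a # b # xs) = (step a b \<in> \<Omega> \<and> pth \<Omega> (b # xs))"
| "pth \<Omega> _ = True"

fun ew :: "(pt \<Rightarrow> real) \<Rightarrow> pt list \<Rightarrow> real" where
  "ew \<rho> (a # b # xs) = \<rho> (step a b) * ew \<rho> (b # xs)"
| "ew \<rho> _ = 1"

definition vt :: "(nat \<Rightarrow> real) \<Rightarrow> pt list \<Rightarrow> real" where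
  "vt \<phi> \<gamma> = (\<Prod>v\<in>set \<gamma>. exp (- \<phi> (visits \<gamma> v)))"

lemma pth_nth: "pth \<Omega> \<gamma> \<longleftrightarrow> (\<forall>i. 0 < i \<longrightarrow> i < length \<gamma> \<longrightarrow> step (\<gamma> ! (i - 1)) (\<gamma> ! i) \<in> \<Omega>)"
proof (induction \<Omega> \<gamma> rule: pth.induct)
  case (1 \<Omega> a b xs)
  show ?case
  proof
    assume H: "pth \<Omega> (a # b # xs)"
    show "\<forall>i. 0 < i \<longrightarrow> i < length (a # b # xs) \<longrightarrow> step ((a # b # xs) ! (i - 1)) ((a # b # xs) ! i) \<in> \<Omega>"
    proof (intro allI impI)
      fix i assume i: "0 < i" "i < length (a # b # xs)"
      show "step ((a # b # xs) ! (i - 1)) ((a # b # xs) ! i) \<in> \<Omega>"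
      proof (cases "i = 1")
        case True then show ?thesis using H by simp
      next
        case False
        then have "0 < i - 1" "i - 1 < length (b # xs)" using i by auto
        moreover have "pth \<Omega> (b # xs)" using H by simp
        ultimately have "step ((b # xs) ! (i - 1 - 1)) ((b # xs) ! (i - 1)) \<in> \<Omega>" using 1 by blast
        moreover have "(a # b # xs) ! (i - 1) = (b # xs) ! (i - 1 - 1)" "(a # b # xs) ! i = (b # xs) ! (i - 1)"
          using False i by (cases i; cases "i - 1"; simp)+
        ultimately show ?thesis by simp
      qed
    qed
  next
    assume H: "\<forall>i. 0 < i \<longrightarrow> i < length (a # b # xs) \<longrightarrow> step ((a # b # xs) ! (i - 1)) ((a # b # xs) ! i) \<in> \<Omega>"
    have "step a b \<in> \<Omega>" using H[rule_format, of 1] by simp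
    moreover have "\<forall>i. 0 < i \<longrightarrow> i < length (b # xs) \<longrightarrow> step ((b # xs) ! (i - 1)) ((b # xs) ! i) \<in> \<Omega>"
    proof (intro allI impI)
      fix i assume i: "0 < i" "i < length (b # xs)"
      have "step ((a # b # xs) ! (Suc i - 1)) ((a # b # xs) ! Suc i) \<in> \<Omega>" using H i by auto
      then show "step ((b # xs) ! (i - 1)) ((b # xs) ! i) \<in> \<Omega>" using i by (cases i) auto
    qed
    ultimately show "pth \<Omega> (a # b # xs)" using 1 by simp
  qed
qed (auto simp: less_Suc_eq)

lemma ew_nth: "ew \<rho> \<gamma> = (\<Prod>i\<in>{1..wlen \<gamma>}. \<rho> (step (\<gamma> ! (i - 1)) (\<gamma> ! i)))"
proof (induction \<rho> \<gamma> rule: ew.induct)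
  case (1 \<rho> a b xs)
  have "(\<Prod>i\<in>{1..wlen (a # b # xs)}. \<rho> (step ((a # b # xs) ! (i - 1)) ((a # b # xs) ! i)))
      = (\<Prod>i\<in>{1..Suc (length xs)}. \<rho> (step ((a # b # xs) ! (i - 1)) ((a # b # xs) ! i)))"
    by (simp add: wlen_def)
  also have "\<dots> = \<rho> (step a b) * (\<Prod>i\<in>{Suc 1..Suc (length xs)}. \<rho> (step ((a # b # xs) ! (i - 1)) ((a # b # xs) ! i)))"
    by (subst prod.atLeast_Suc_atMost) auto
  also have "(\<Prod>i\<in>{Suc 1..Suc (length xs)}. \<rho> (step ((a # b # xs) ! (i - 1)) ((a # b # xs) ! i)))
      = (\<Prod>i\<in>{1..length xs}. \<rho> (step ((b # xs) ! (i - 1)) ((b # xs) ! i)))"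
    unfolding prod.shift_bounds_cl_Suc_ivl by (auto intro!: prod.cong)
  also have "\<dots> = ew \<rho> (b # xs)" using 1 by (simp add: wlen_def)
  finally show ?case by simp
qed (auto simp: wlen_def)

lemma sigma_eq: "sigma \<rho> \<phi> \<gamma> = vt \<phi> \<gamma> * ew \<rho> \<gamma>"
  by (simp add: sigma_def vt_def ew_nth)

lemma walks_iff: "\<gamma> \<in> walks \<Omega> n \<longleftrightarrow> length \<gamma> = Suc n \<and> hd \<gamma> = origin \<and> pth \<Omega> \<gamma>"
proof -
  have "length \<gamma> = Suc n \<Longrightarrow> \<gamma> ! 0 = hd \<gamma>" by (cases \<gamma>) auto
  moreover have "length \<gamma> = Suc n \<Longrightarrow> (\<forall>i\<in>{1..n}. step (\<gamma> ! (i - 1)) (\<gamma> ! i) \<in> \<Omega>) \<longleftrightarrow> pth \<Omega> \<gamma>"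
    unfolding pth_nth by auto
  ultimately show ?thesis unfolding walks_def by auto
qed


definition neg :: "pt \<Rightarrow> pt" where "neg p = (\<lambda>i. - p i)"
definition refl0 :: "pt \<Rightarrow> pt" where "refl0 p = p(0 := - p 0)"

lemma step_step: "step (step c a) (step c b) = step a b"
  by (simp add: step_def)
lemma step_swap: "step b a = neg (step a b)"
  by (simp add: step_def neg_def)
lemma step_refl0: "step (refl0 a) (refl0 b) = refl0 (step a b)"
  by (auto simp: step_def refl0_def)
lemma neg_neg[simp]: "neg (neg p) = p" by (simp add: neg_def)
lemma refl0_refl0[simp]: "refl0 (refl0 p) = p" by (simp add: refl0_def)
lemma inj_refl0: "inj refl0" by (metis injI refl0_refl0)
lemma inj_step: "inj (step c)" by (auto simp: inj_def step_def fun_eq_iff)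
lemma xc_step: "xc (step a b) = xc b - xc a" by (simp add: xc_def step_def)
lemma xc_refl0: "xc (refl0 a) = - xc a" by (simp add: xc_def refl0_def)
lemma xc_neg: "xc (neg a) = - xc a" by (simp add: xc_def neg_def)
lemma step_self: "step a a = origin" by (simp add: step_def origin_def)

lemma visits_append: "visits (xs @ ys) v = visits xs v + visits ys v"
  by (simp add: visits_def)
lemma visits_rev: "visits (rev xs) v = visits xs v"
  by (simp add: visits_def flip: rev_filter)
lemma visits_map_inj: "inj f \<Longrightarrow> visits (map f xs) (f v) = visits xs v"
  by (induction xs) (auto simp: visits_def inj_def)
lemma visits_Cons: "visits (a # xs) v = (if a = v then Suc (visits xs v) else visits xs v)"
  by (simp add: visits_def)
lemma visits_0: "v \<notin> set xs \<Longrightarrow> visits xs v = 0"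
  by (induction xs) (auto simp: visits_def)
lemma visits_ge1: "v \<in> set xs \<Longrightarrow> visits xs v \<ge> 1"
  by (induction xs) (auto simp: visits_def)

lemma vt_pos: "vt \<phi> \<gamma> > 0" by (simp add: vt_def prod_pos)

lemma vt_extend:
  assumes "finite U" "set \<gamma> \<subseteq> U" "\<phi> 0 = 0"
  shows "vt \<phi> \<gamma> = (\<Prod>v\<in>U. exp (- \<phi> (visits \<gamma> v)))"
  unfolding vt_def
  by (rule prod.mono_neutral_left) (use assms in \<open>auto simp: visits_0\<close>)

lemma vt_append_le:
  assumes "\<phi> 0 = 0" "\<forall>a b. \<phi> (a + b) \<ge> \<phi> a + \<phi> b"
  shows "vt \<phi> (xs @ ys) \<le> vt \<phi> xs * vt \<phi> ys"
proof -
  let ?U = "set xs \<union> set ys"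
  have "vt \<phi> (xs @ ys) = (\<Prod>v\<in>?U. exp (- \<phi> (visits xs v + visits ys v)))"
    using vt_extend[of ?U "xs @ ys" \<phi>] assms by (simp add: visits_append)
  also have "\<dots> \<le> (\<Prod>v\<in>?U. exp (- \<phi> (visits xs v)) * exp (- \<phi> (visits ys v)))"
  proof (rule prod_mono)
    fix v
    have "\<phi> (visits xs v) + \<phi> (visits ys v) \<le> \<phi> (visits xs v + visits ys v)" using assms(2) by blast
    then show "0 \<le> exp (- \<phi> (visits xs v + visits ys v)) \<and>
      exp (- \<phi> (visits xs v + visits ys v)) \<le> exp (- \<phi> (visits xs v)) * exp (- \<phi> (visits ys v))"
      by (simp flip: exp_add)
  qed
  also have "\<dots> = vt \<phi> xs * vt \<phi> ys"
    using vt_extend[of ?U xs \<phi>] vt_extend[of ?U ys \<phi>] assms by (simp add: prod.distrib)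
  finally show ?thesis .
qed

lemma vt_append_disj:
  assumes "\<phi> 0 = 0" "set xs \<inter> set ys = {}"
  shows "vt \<phi> (xs @ ys) = vt \<phi> xs * vt \<phi> ys"
proof -
  let ?U = "set xs \<union> set ys"
  have "vt \<phi> (xs @ ys) = (\<Prod>v\<in>?U. exp (- \<phi> (visits xs v + visits ys v)))"
    using vt_extend[of ?U "xs @ ys" \<phi>] assms by (simp add: visits_append)
  also have "\<dots> = (\<Prod>v\<in>?U. exp (- \<phi> (visits xs v)) * exp (- \<phi> (visits ys v)))"
  proof (rule prod.cong)
    fix v assume "v \<in> ?U"
    then have "v \<notin> set xs \<or> v \<notin> set ys" using assms(2) by blast
    then have "visits xs v = 0 \<or> visits ys v = 0" using visits_0 by metis
    then show "exp (- \<phi> (visits xs v + visits ys v)) = exp (- \<phi> (visits xs v)) * exp (- \<phi> (visits ys v))"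
      using assms(1) by auto
  qed simp
  also have "\<dots> = vt \<phi> xs * vt \<phi> ys"
    using vt_extend[of ?U xs \<phi>] vt_extend[of ?U ys \<phi>] assms by (simp add: prod.distrib)
  finally show ?thesis .
qed

lemma vt_map_inj: "inj f \<Longrightarrow> vt \<phi> (map f \<gamma>) = vt \<phi> \<gamma>"
  unfolding vt_def by (simp add: prod.reindex inj_on_subset visits_map_inj)

lemma vt_rev: "vt \<phi> (rev \<gamma>) = vt \<phi> \<gamma>"
  unfolding vt_def by (simp add: visits_rev)

lemma vt_Cons_notin:
  assumes "\<phi> 1 = 0" "\<phi> 0 = 0" "a \<notin> set xs"
  shows "vt \<phi> (a # xs) = vt \<phi> xs"
proof -
  have "vt \<phi> (a # xs) = vt \<phi> [a] * vt \<phi> xs"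
    using vt_append_disj[of \<phi> "[a]" xs] assms by simp
  also have "vt \<phi> [a] = 1" using assms by (simp add: vt_def visits_def)
  finally show ?thesis by simp
qed

lemma vt_glue_le:
  assumes "\<phi> 0 = 0" "\<phi> 1 = 0" "\<forall>a b. \<phi> (a + b) \<ge> \<phi> a + \<phi> b" "hd ys \<notin> set (tl ys)" "ys \<noteq> []"
  shows "vt \<phi> (xs @ tl ys) \<le> vt \<phi> xs * vt \<phi> ys"
proof -
  have "vt \<phi> ys = vt \<phi> (tl ys)" using vt_Cons_notin[of \<phi> "hd ys" "tl ys"] assms by simp
  then show ?thesis using vt_append_le[of \<phi> xs "tl ys"] assms by simp
qed

lemma vt_glue_eq:
  assumes "\<phi> 0 = 0" "\<phi> 1 = 0" "hd ys \<notin> set (tl ys)" "ys \<noteq> []" "set xs \<inter> set (tl ys) = {}"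
  shows "vt \<phi> (xs @ tl ys) = vt \<phi> xs * vt \<phi> ys"
proof -
  have "vt \<phi> ys = vt \<phi> (tl ys)" using vt_Cons_notin[of \<phi> "hd ys" "tl ys"] assms by simp
  then show ?thesis using vt_append_disj[of \<phi> xs "tl ys"] assms by simp
qed

lemma ew_glue: "xs \<noteq> [] \<Longrightarrow> ys \<noteq> [] \<Longrightarrow> last xs = hd ys \<Longrightarrow> ew \<rho> (xs @ tl ys) = ew \<rho> xs * ew \<rho> ys"
proof (induction xs rule: induct_list012)
  case (2 x)
  then show ?case by (cases ys) auto
next
  case (3 x y zs)
  then show ?case by auto
qed auto

lemma pth_glue: "xs \<noteq> [] \<Longrightarrow> ys \<noteq> [] \<Longrightarrow> last xs = hd ys \<Longrightarrow> pth \<Omega> (xs @ tl ys) \<longleftrightarrow> pth \<Omega> xs \<and> pth \<Omega> ys"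
proof (induction xs rule: induct_list012)
  case (2 x)
  then show ?case by (cases ys) auto
next
  case (3 x y zs)
  then show ?case by auto
qed auto

lemma ew_map: "(\<And>a b. step (f a) (f b) = g (step a b)) \<Longrightarrow> ew \<rho> (map f \<gamma>) = ew (\<rho> \<circ> g) \<gamma>"
  by (induction \<rho> \<gamma> rule: ew.induct) auto

lemma pth_map: "(\<And>a b. step (f a) (f b) = g (step a b)) \<Longrightarrow> pth \<Omega> (map f \<gamma>) \<longleftrightarrow> pth (g -` \<Omega>) \<gamma>"
  by (induction \<Omega> \<gamma> rule: pth.induct) auto

lemma ew_snoc: "xs \<noteq> [] \<Longrightarrow> ew \<rho> (xs @ [a]) = ew \<rho> xs * \<rho> (step (last xs) a)"
  by (induction xs rule: induct_list012) auto

lemma pth_snoc: "xs \<noteq> [] \<Longrightarrow> pth \<Omega> (xs @ [a]) \<longleftrightarrow> pth \<Omega> xs \<and> step (last xs) a \<in> \<Omega>"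
  by (induction xs rule: induct_list012) auto

lemma ew_rev: "ew \<rho> (rev \<gamma>) = ew (\<rho> \<circ> neg) \<gamma>"
proof (induction \<rho> \<gamma> rule: ew.induct)
  case (1 \<rho> a b xs)
  have "ew \<rho> (rev (a # b # xs)) = ew \<rho> (rev (b # xs)) * \<rho> (step b a)"
    using ew_snoc[of "rev (b#xs)" \<rho> a] by simp
  then show ?case using 1 by (simp add: step_swap[of b a] mult.commute)
qed auto

lemma pth_rev: "pth \<Omega> (rev \<gamma>) \<longleftrightarrow> pth (neg -` \<Omega>) \<gamma>"
proof (induction \<Omega> \<gamma> rule: pth.induct)
  case (1 \<Omega> a b xs)
  have "pth \<Omega> (rev (a # b # xs)) \<longleftrightarrow> pth \<Omega> (rev (b # xs)) \<and> step b a \<in> \<Omega>"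
    using pth_snoc[of "rev (b#xs)" \<Omega> a] by simp
  then show ?case using 1 by (auto simp: step_swap[of b a])
qed auto

lemma ew_cong: "pth \<Omega> \<gamma> \<Longrightarrow> (\<And>v. v \<in> \<Omega> \<Longrightarrow> \<rho> v = \<rho>' v) \<Longrightarrow> ew \<rho> \<gamma> = ew \<rho>' \<gamma>"
  by (induction \<Omega> \<gamma> rule: pth.induct) auto

lemma ew_nonneg: "pth \<Omega> \<gamma> \<Longrightarrow> (\<And>v. v \<in> \<Omega> \<Longrightarrow> \<rho> v \<ge> 0) \<Longrightarrow> ew \<rho> \<gamma> \<ge> 0"
  by (induction \<Omega> \<gamma> rule: pth.induct) auto

lemma ew_le1: "pth \<Omega> \<gamma> \<Longrightarrow> (\<And>v. v \<in> \<Omega> \<Longrightarrow> \<rho> v \<ge> 0 \<and> \<rho> v \<le> 1) \<Longrightarrow> ew \<rho> \<gamma> \<le> 1"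
proof (induction \<Omega> \<gamma> rule: pth.induct)
  case (1 \<Omega> a b xs)
  then have "0 \<le> ew \<rho> (b # xs)" using ew_nonneg[of \<Omega> "b#xs" \<rho>] by auto
  then show ?case using 1 by (auto intro: mult_le_one)
qed auto

lemma pth_sub: "pth \<Omega> \<gamma> \<Longrightarrow> \<Omega> \<subseteq> \<Omega>' \<Longrightarrow> pth \<Omega>' \<gamma>"
  by (induction \<Omega> \<gamma> rule: pth.induct) auto


definition addp :: "pt \<Rightarrow> pt \<Rightarrow> pt" where "addp a v = (\<lambda>i. a i + v i)"
lemma step_addp[simp]: "step a (addp a v) = v" by (simp add: step_def addp_def)
lemma addp_step[simp]: "addp a (step a b) = b" by (simp add: step_def addp_def)

locale poly =
  fixes d :: nat and \<Omega> :: "pt set" and \<rho> :: "pt \<Rightarrow> real" and \<phi> :: "nat \<Rightarrow> real"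
  assumes d1: "d \<ge> 1"
    and finO: "finite \<Omega>" and inZ: "\<forall>v\<in>\<Omega>. in_Zd d v" and orig: "origin \<notin> \<Omega>"
    and symO: "\<forall>g. sym_Zd d g \<longrightarrow> g ` \<Omega> = \<Omega>"
    and phinn: "\<forall>a. \<phi> a \<ge> 0" and phi0: "\<phi> 0 = 0" and phi1: "\<phi> 1 = 0"
    and phisup: "\<forall>a b. \<phi> (a + b) \<ge> \<phi> a + \<phi> b"
    and rhonn: "\<forall>v\<in>\<Omega>. \<rho> v \<ge> 0" and rhosum: "(\<Sum>v\<in>\<Omega>. \<rho> v) = 1"
    and symr: "\<forall>g. sym_Zd d g \<longrightarrow> (\<forall>v\<in>\<Omega>. \<rho> (g v) = \<rho> v)"
begin

lemma sym_apply:
  assumes "bij_betw \<pi> {..<d} {..<d}" "\<forall>i. s i \<in> {1, -1::int}"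
    and "\<And>v. v \<in> \<Omega> \<Longrightarrow> g v = (\<lambda>i. if i < d then s i * v (\<pi> i) else 0)"
  shows "g ` \<Omega> = \<Omega>" "\<And>v. v \<in> \<Omega> \<Longrightarrow> \<rho> (g v) = \<rho> v"
proof -
  let ?G = "\<lambda>v i. if i < d then s i * v (\<pi> i) else 0"
  have sg: "sym_Zd d ?G" unfolding sym_Zd_def using assms by blast
  have "g ` \<Omega> = ?G ` \<Omega>" using assms(3) by (auto simp: image_def)
  then show "g ` \<Omega> = \<Omega>" using symO sg by simp
  show "\<And>v. v \<in> \<Omega> \<Longrightarrow> \<rho> (g v) = \<rho> v"
  proof -
    fix v assume v: "v \<in> \<Omega>"
    have "\<rho> (?G v) = \<rho> v" using symr sg v by blast
    then show "\<rho> (g v) = \<rho> v" using assms(3)[OF v] by simp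
  qed
qed

lemma refl0_props: "refl0 ` \<Omega> = \<Omega>" "\<And>v. v \<in> \<Omega> \<Longrightarrow> \<rho> (refl0 v) = \<rho> v"
proof -
  let ?s = "\<lambda>i. if i = 0 then -1 else (1::int)"
  have "\<And>v. v \<in> \<Omega> \<Longrightarrow> refl0 v = (\<lambda>i. if i < d then ?s i * v (id i) else 0)"
    using inZ d1 by (auto simp: refl0_def in_Zd_def fun_eq_iff)
  from sym_apply[OF bij_betw_id[of "{..<d}"] _ this]
  show "refl0 ` \<Omega> = \<Omega>" "\<And>v. v \<in> \<Omega> \<Longrightarrow> \<rho> (refl0 v) = \<rho> v" by auto
qed

lemma neg_props: "neg ` \<Omega> = \<Omega>" "\<And>v. v \<in> \<Omega> \<Longrightarrow> \<rho> (neg v) = \<rho> v"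
proof -
  let ?s = "\<lambda>i. (-1::int)"
  have "\<And>v. v \<in> \<Omega> \<Longrightarrow> neg v = (\<lambda>i. if i < d then ?s i * v (id i) else 0)"
    using inZ d1 by (auto simp: neg_def in_Zd_def fun_eq_iff)
  from sym_apply[OF bij_betw_id[of "{..<d}"] _ this]
  show "neg ` \<Omega> = \<Omega>" "\<And>v. v \<in> \<Omega> \<Longrightarrow> \<rho> (neg v) = \<rho> v" by auto
qed

lemma refl0_vimage: "refl0 -` \<Omega> = \<Omega>"
  using refl0_props(1) by (metis refl0_refl0 bij_vimage_eq_inv_image inj_refl0 bij_def inv_equality surj_def
      image_vimage_eq surj_imp_inv_eq)

lemma neg_vimage: "neg -` \<Omega> = \<Omega>"
proof -
  have "v \<in> neg -` \<Omega> \<longleftrightarrow> v \<in> \<Omega>" for v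
    using neg_props(1) by (metis image_eqI imageE neg_neg vimage_eq)
  then show ?thesis by blast
qed

lemma rho_le1: "v \<in> \<Omega> \<Longrightarrow> \<rho> v \<le> 1"
  using member_le_sum[of v \<Omega> \<rho>] rhonn rhosum finO by auto

lemma exists_e: "\<exists>e\<in>\<Omega>. xc e > 0 \<and> \<rho> e > 0"
proof -
  obtain v where v: "v \<in> \<Omega>" "\<rho> v > 0"
  proof (rule ccontr)
    assume "\<not> thesis"
    then have "\<forall>v\<in>\<Omega>. \<rho> v = 0" using rhonn that by force
    then show False using rhosum by simp
  qed
  obtain j where j: "j < d" "v j \<noteq> 0"
  proof (rule ccontr)
    assume "\<not> thesis"
    then have "\<forall>i. v i = 0" using inZ v(1) that unfolding in_Zd_def by (meson not_le)
    then have "v = origin" by (auto simp: origin_def)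
    then show False using orig v by simp
  qed
  define \<pi> where "\<pi> = (\<lambda>i::nat. if i = 0 then j else if i = j then 0 else i)"
  define s where "s = (\<lambda>i::nat. if i = 0 \<and> v j < 0 then -1 else (1::int))"
  define g where "g = (\<lambda>w i. if i < d then s i * w (\<pi> i) else 0)"
  have bij: "bij_betw \<pi> {..<d} {..<d}"
  proof -
    have "\<pi> \<circ> \<pi> = id" by (auto simp: \<pi>_def fun_eq_iff)
    moreover have "\<pi> ` {..<d} \<subseteq> {..<d}" using j d1 by (auto simp: \<pi>_def)
    ultimately show ?thesis by (intro bij_betw_byWitness[where f'=\<pi>]) (auto simp: fun_eq_iff)
  qed
  have s: "\<forall>i. s i \<in> {1, -1}" by (auto simp: s_def)
  from sym_apply[OF bij s, of g] have G: "g ` \<Omega> = \<Omega>" "\<rho> (g v) = \<rho> v" using v by (auto simp: g_def)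
  have "g v \<in> \<Omega>" using G v by blast
  moreover have "xc (g v) > 0" using d1 j by (auto simp: g_def xc_def s_def \<pi>_def)
  ultimately show ?thesis using G v by auto
qed

lemma sigma_nonneg: "pth \<Omega> \<gamma> \<Longrightarrow> sigma \<rho> \<phi> \<gamma> \<ge> 0"
  unfolding sigma_eq using ew_nonneg[of \<Omega> \<gamma> \<rho>] rhonn vt_pos[of \<phi> \<gamma>] by auto

lemma ew_refl0: "pth \<Omega> \<gamma> \<Longrightarrow> ew \<rho> (map (\<lambda>p. refl0 (step c p)) \<gamma>) = ew \<rho> \<gamma>"
  by (subst ew_map[where g=refl0]) (auto simp: step_refl0 step_step refl0_props intro: ew_cong)

lemma pth_refl0: "pth \<Omega> (map (\<lambda>p. refl0 (step c p)) \<gamma>) \<longleftrightarrow> pth \<Omega> \<gamma>"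
  by (subst pth_map[where g=refl0]) (auto simp: step_refl0 step_step refl0_vimage)

lemma ew_tr: "ew \<rho> (map (step c) \<gamma>) = ew \<rho> \<gamma>"
  by (subst ew_map[where g=id]) (auto simp: step_step)

lemma pth_tr: "pth \<Omega> (map (step c) \<gamma>) \<longleftrightarrow> pth \<Omega> \<gamma>"
  by (subst pth_map[where g=id]) (auto simp: step_step)

lemma inj_refl_step: "inj (\<lambda>p. refl0 (step c p))"
  using inj_compose[OF inj_refl0 inj_step, of c] by (simp add: comp_def)

lemma sigma_refl: "pth \<Omega> \<gamma> \<Longrightarrow> sigma \<rho> \<phi> (map (\<lambda>p. refl0 (step c p)) \<gamma>) = sigma \<rho> \<phi> \<gamma>"
  unfolding sigma_eq using ew_refl0 vt_map_inj[OF inj_refl_step] by simp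

lemma sigma_tr: "sigma \<rho> \<phi> (map (step c) \<gamma>) = sigma \<rho> \<phi> \<gamma>"
  unfolding sigma_eq using ew_tr vt_map_inj[OF inj_step] by simp

lemma ew_rev': "pth \<Omega> \<gamma> \<Longrightarrow> ew \<rho> (rev \<gamma>) = ew \<rho> \<gamma>"
  using ew_cong[of \<Omega> \<gamma> "\<rho> \<circ> neg" \<rho>] neg_props(2) by (simp add: ew_rev)

lemma pth_rev': "pth \<Omega> (rev \<gamma>) \<longleftrightarrow> pth \<Omega> \<gamma>"
  by (simp add: pth_rev neg_vimage)

lemma sigma_rev: "pth \<Omega> \<gamma> \<Longrightarrow> sigma \<rho> \<phi> (rev \<gamma>) = sigma \<rho> \<phi> \<gamma>"
  unfolding sigma_eq using ew_rev' vt_rev by simp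

lemma finite_walks: "finite (walks \<Omega> n)"
proof (induction n)
  case 0
  have "walks \<Omega> 0 \<subseteq> {[origin]}" by (auto simp: walks_iff length_Suc_conv)
  then show ?case by (rule finite_subset) simp
next
  case (Suc n)
  have "walks \<Omega> (Suc n) \<subseteq> (\<lambda>(\<gamma>, v). \<gamma> @ [addp (last \<gamma>) v]) ` (walks \<Omega> n \<times> \<Omega>)"
  proof
    fix \<gamma> assume g: "\<gamma> \<in> walks \<Omega> (Suc n)"
    then have l: "length \<gamma> = Suc (Suc n)" "hd \<gamma> = origin" "pth \<Omega> \<gamma>" by (auto simp: walks_iff)
    then have ne: "butlast \<gamma> \<noteq> []" by (cases \<gamma> rule: rev_cases) auto
    have e: "\<gamma> = butlast \<gamma> @ [last \<gamma>]" using l by (cases \<gamma> rule: rev_cases) auto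
    then have p: "pth \<Omega> (butlast \<gamma>)" "step (last (butlast \<gamma>)) (last \<gamma>) \<in> \<Omega>"
      using pth_snoc[OF ne, of \<Omega> "last \<gamma>"] l by auto
    have "hd (butlast \<gamma>) = origin" using e ne l(2) by (metis hd_append2)
    then have "butlast \<gamma> \<in> walks \<Omega> n" using l p ne by (auto simp: walks_iff)
    then show "\<gamma> \<in> (\<lambda>(\<gamma>, v). \<gamma> @ [addp (last \<gamma>) v]) ` (walks \<Omega> n \<times> \<Omega>)"
      using p e by (intro image_eqI[where x="(butlast \<gamma>, step (last (butlast \<gamma>)) (last \<gamma>))"]) auto
  qed
  then show ?case by (rule finite_subset) (use Suc finO in auto)
qed

lemma sigma_walk_nonneg: "\<gamma> \<in> walks \<Omega> n \<Longrightarrow> sigma \<rho> \<phi> \<gamma> \<ge> 0"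
  using sigma_nonneg by (auto simp: walks_iff)

end


lemma last_take_nth_conv: "n < length xs \<Longrightarrow> last (take (Suc n) xs) = xs ! n"
  by (metis last_snoc take_Suc_conv_app_nth)

lemma visits_distinct: "distinct xs \<Longrightarrow> v \<in> set xs \<Longrightarrow> visits xs v = 1"
  by (induction xs) (auto simp: visits_def filter_empty_conv)

lemma sum_inj_le:
  fixes f :: "'a \<Rightarrow> real" and g :: "'b \<Rightarrow> real"
  assumes "finite B" "inj_on h A" "h ` A \<subseteq> B" "\<And>x. x \<in> A \<Longrightarrow> f x \<le> g (h x)" "\<And>y. y \<in> B \<Longrightarrow> g y \<ge> 0"
  shows "sum f A \<le> sum g B"
proof -
  have fA: "finite A" using assms(1-3) by (meson finite_imageD finite_subset)
  have "sum f A \<le> sum (g \<circ> h) A" using assms(4) by (intro sum_mono) auto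
  also have "\<dots> = sum g (h ` A)" using sum.reindex[OF assms(2), of g] by (simp add: comp_def)
  also have "\<dots> \<le> sum g B" using assms by (intro sum_mono2) auto
  finally show ?thesis .
qed

lemma fekete:
  fixes a :: "nat \<Rightarrow> real" and c :: real
  assumes sub: "\<And>k l. k \<ge> 1 \<Longrightarrow> l \<ge> 1 \<Longrightarrow> a (k + l) \<le> a k + a l"
    and bnd: "\<And>k. k \<ge> 1 \<Longrightarrow> a k \<ge> c * k"
  defines "L \<equiv> Inf ((\<lambda>k. a k / k) ` {1..})"
  shows "(\<lambda>n. a n / n) \<longlonglongrightarrow> L" "\<And>k. k \<ge> 1 \<Longrightarrow> a k \<ge> L * k"
proof -
  have bdd: "bdd_below ((\<lambda>k. a k / k) ` {1..})"
  proof (rule bdd_belowI[where m=c])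
    fix x assume "x \<in> (\<lambda>k. a k / k) ` {1..}"
    then obtain k where "k \<ge> 1" "x = a k / k" by auto
    then show "c \<le> x" using bnd[of k] by (simp add: le_divide_eq)
  qed
  have low: "L \<le> a k / k" if "k \<ge> 1" for k
    unfolding L_def using that bdd by (intro cInf_lower) auto
  show low2: "\<And>k. k \<ge> 1 \<Longrightarrow> a k \<ge> L * k"
    using low by (simp add: field_simps)
  have mult: "a (q * m + r) \<le> q * a m + a r" if "m \<ge> 1" "r \<ge> 1" for q m r
  proof (induction q)
    case (Suc q)
    have "a (Suc q * m + r) = a (m + (q * m + r))" by (simp add: algebra_simps)
    also have "\<dots> \<le> a m + a (q * m + r)" using sub that by simp
    finally show ?case using Suc by (simp add: algebra_simps)
  qed simp
  show "(\<lambda>n. a n / n) \<longlonglongrightarrow> L"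
  proof (rule LIMSEQ_I)
    fix e :: real assume e: "e > 0"
    have "\<exists>x\<in>(\<lambda>k. a k / k) ` {1..}. x < L + e / 2"
      unfolding L_def using bdd e by (intro cInf_lessD) auto
    then obtain m where m: "m \<ge> 1" "a m / m < L + e / 2" by auto
    define A where "A = a m / m"
    define M where "M = (\<Sum>r\<in>{1..m}. \<bar>a r\<bar>)"
    have M: "\<bar>a r\<bar> \<le> M" if "r \<in> {1..m}" for r
      unfolding M_def using that by (intro member_le_sum) auto
    define K where "K = m * \<bar>A\<bar> + M"
    have K: "K \<ge> 0" using M[of 1] m by (auto simp: K_def)
    obtain N :: nat where N: "N > 2 * K / e" using reals_Archimedean2 by blast
    show "\<exists>N. \<forall>n\<ge>N. norm (a n / real n - L) < e"
    proof (intro exI[of _ "Suc N"] allI impI)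
      fix n assume n: "n \<ge> Suc N"
      define q where "q = (n - 1) div m"
      define r where "r = (n - 1) mod m + 1"
      have qr: "n = q * m + r" using n m unfolding q_def r_def
        by (metis One_nat_def Suc_le_D add_Suc_right diff_Suc_1 div_mult_mod_eq le_add1 le_add_same_cancel2 plus_1_eq_Suc add.commute)
      have r: "r \<in> {1..m}" using m unfolding r_def by (auto simp: Suc_le_eq)
      have qm: "real (q * m) \<le> n" "real n \<le> q * m + m" using qr r by auto
      have "a n \<le> q * a m + a r" using mult[OF m(1), of r q] qr r by simp
      also have "q * a m = real (q * m) * A" using m by (simp add: A_def)
      also have "\<dots> \<le> n * A + m * \<bar>A\<bar>"
      proof (cases "A \<ge> 0")
        case True
        have "real (q*m) * A \<le> real n * A" by (rule mult_right_mono[OF qm(1) True])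
        moreover have "0 \<le> real m * A" using True by simp
        ultimately show ?thesis by (simp only: abs_of_nonneg[OF True])
      next
        case False
        have "real (q * m) * A \<le> (real n - m) * A" using qm False by (intro mult_right_mono_neg) auto
        then show ?thesis using False by (simp add: algebra_simps)
      qed
      finally have "a n \<le> n * A + K" using M[OF r] by (simp add: K_def)
      moreover have npos: "real n > 0" using n by simp
      ultimately have "a n / n \<le> A + K / n" by (simp add: field_simps)
      moreover have "K / n < e / 2"
      proof -
        have "real n > 2 * K / e" using N n by linarith
        then show ?thesis using e npos by (simp add: field_simps)
      qed
      ultimately have "a n / n < L + e" using m(2) A_def by linarith
      moreover have "L \<le> a n / n" using low n by simp
      ultimately show "norm (a n / real n - L) < e" by simp
    qed
  qed
qed

context poly
begin

definition Z :: "nat \<Rightarrow> real" where "Z n = Zn \<Omega> \<rho> \<phi> n"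

definition line :: "pt \<Rightarrow> nat \<Rightarrow> pt list" where
  "line e n = map (\<lambda>k i. int k * e i) [0..<Suc n]"

lemma line_Suc: "line e (Suc n) = line e n @ [(\<lambda>i. int (Suc n) * e i)]"
  by (simp add: line_def)

lemma line_props:
  assumes e: "e \<in> \<Omega>" "xc e > 0"
  shows "line e n \<in> walks \<Omega> n" "sigma \<rho> \<phi> (line e n) = \<rho> e ^ n"
proof -
  have last: "last (line e n) = (\<lambda>i. int n * e i)" by (simp add: line_def)
  have ne: "line e n \<noteq> []" by (simp add: line_def)
  have stp: "step (\<lambda>i. int n * e i) (\<lambda>i. int (Suc n) * e i) = e" for n
    by (auto simp: step_def algebra_simps)
  have stp2: "step (\<lambda>i. int n * e i) (\<lambda>i. (1 + int n) * e i) = e" for n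
    by (auto simp: step_def algebra_simps)
  have p: "pth \<Omega> (line e n) \<and> ew \<rho> (line e n) = \<rho> e ^ n"
  proof (induction n)
    case 0 then show ?case by (simp add: line_def)
  next
    case (Suc n)
    have ne: "line e n \<noteq> []" by (simp add: line_def)
    have l: "last (line e n) = (\<lambda>i. int n * e i)" by (simp add: line_def)
    show ?case unfolding line_Suc using Suc ne e
      by (simp add: pth_snoc ew_snoc l stp stp2)
  qed
  have hd: "hd (line e n) = origin" by (simp add: line_def origin_def hd_map upt_conv_Cons del: upt_Suc)
  show "line e n \<in> walks \<Omega> n" using p hd by (simp add: walks_iff line_def)
  have "distinct (line e n)"
  proof -
    have "inj_on (\<lambda>k i. int k * e i) {0..<Suc n}"
    proof (rule inj_onI)
      fix k l assume "(\<lambda>i. int k * e i) = (\<lambda>i. int l * e i)"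
      then have "int k * e 0 = int l * e 0" by meson
      then show "k = l" using e(2) by (simp add: xc_def)
    qed
    then show ?thesis by (simp add: line_def distinct_map del: upt_Suc)
  qed
  then have "vt \<phi> (line e n) = 1"
    unfolding vt_def using phi1 by (auto intro!: prod.neutral simp: visits_distinct)
  then show "sigma \<rho> \<phi> (line e n) = \<rho> e ^ n" using p by (simp add: sigma_eq)
qed

lemma Z_lower_e: "e \<in> \<Omega> \<Longrightarrow> xc e > 0 \<Longrightarrow> Z n \<ge> \<rho> e ^ n"
proof -
  assume e: "e \<in> \<Omega>" "xc e > 0"
  have "sigma \<rho> \<phi> (line e n) \<le> (\<Sum>\<gamma>\<in>walks \<Omega> n. sigma \<rho> \<phi> \<gamma>)"
    using line_props[OF e, of n] sigma_walk_nonneg finite_walks by (intro member_le_sum) auto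
  then show ?thesis using line_props[OF e, of n] by (simp add: Z_def Zn_def)
qed

lemma Z_pos: "Z n > 0"
proof -
  obtain e where "e \<in> \<Omega>" "xc e > 0" "\<rho> e > 0" using exists_e by blast
  then show ?thesis using Z_lower_e[of e n] by (meson less_le_trans zero_less_power)
qed

lemma Z_submult: "Z (n + m + 1) \<le> Z n * Z m"
proof -
  let ?h = "\<lambda>\<gamma>. (take (Suc n) \<gamma>, step (\<gamma> ! n) (\<gamma> ! Suc n), map (step (\<gamma> ! Suc n)) (drop (Suc n) \<gamma>))"
  let ?F = "\<lambda>p. sigma \<rho> \<phi> (fst p) * (\<rho> (fst (snd p)) * sigma \<rho> \<phi> (snd (snd p)))"
  have "Z (n + m + 1) \<le> (\<Sum>p\<in>walks \<Omega> n \<times> (\<Omega> \<times> walks \<Omega> m). ?F p)"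
    unfolding Z_def Zn_def
  proof (rule sum_inj_le)
    show "finite (walks \<Omega> n \<times> (\<Omega> \<times> walks \<Omega> m))" using finite_walks finO by simp
    show "inj_on ?h (walks \<Omega> (n + m + 1))"
    proof (rule inj_onI)
      fix x y assume x: "x \<in> walks \<Omega> (n + m + 1)" and y: "y \<in> walks \<Omega> (n + m + 1)" and h: "?h x = ?h y"
      have lx: "length x = n + m + 2" and ly: "length y = n + m + 2" using x y by (auto simp: walks_iff)
      have t: "take (Suc n) x = take (Suc n) y" using h by simp
      then have "x ! n = y ! n" by (metis lessI nth_take)
      moreover have "step (x ! n) (x ! Suc n) = step (y ! n) (y ! Suc n)" using h by simp
      ultimately have xy: "x ! Suc n = y ! Suc n" by (metis addp_step)
      have "map (step (x ! Suc n)) (drop (Suc n) x) = map (step (y ! Suc n)) (drop (Suc n) y)" using h by simp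
      then have "drop (Suc n) x = drop (Suc n) y" using xy inj_step[of "y ! Suc n"]
        by (simp add: inj_map_eq_map)
      then show "x = y" using t by (metis append_take_drop_id)
    qed
    show "?h ` walks \<Omega> (n + m + 1) \<subseteq> walks \<Omega> n \<times> (\<Omega> \<times> walks \<Omega> m)"
    proof safe
      fix \<gamma> assume g: "\<gamma> \<in> walks \<Omega> (n + m + 1)"
      then have l: "length \<gamma> = n + m + 2" "hd \<gamma> = origin" "pth \<Omega> \<gamma>" by (auto simp: walks_iff)
      have ne1: "take (Suc n) \<gamma> \<noteq> []" "drop (Suc n) \<gamma> \<noteq> []" using l by auto
      have split: "\<gamma> = take (Suc n) \<gamma> @ tl (last (take (Suc n) \<gamma>) # drop (Suc n) \<gamma>)" by simp
      have "pth \<Omega> (take (Suc n) \<gamma>) \<and> pth \<Omega> (last (take (Suc n) \<gamma>) # drop (Suc n) \<gamma>)"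
        using pth_glue[OF ne1(1), of "last (take (Suc n) \<gamma>) # drop (Suc n) \<gamma>" \<Omega>] split l by simp
      moreover have "last (take (Suc n) \<gamma>) = \<gamma> ! n" using l by (simp add: last_take_nth_conv)
      moreover have "drop (Suc n) \<gamma> = \<gamma> ! Suc n # drop (Suc (Suc n)) \<gamma>" using l by (simp add: Cons_nth_drop_Suc)
      ultimately have p: "pth \<Omega> (take (Suc n) \<gamma>)" "pth \<Omega> (drop (Suc n) \<gamma>)" "step (\<gamma> ! n) (\<gamma> ! Suc n) \<in> \<Omega>"
        by (metis pth.simps(1))+
      show "take (Suc n) \<gamma> \<in> walks \<Omega> n" using l p by (auto simp: walks_iff)
      show "step (\<gamma> ! n) (\<gamma> ! Suc n) \<in> \<Omega>" by (rule p(3))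
      have "hd (map (step (\<gamma> ! Suc n)) (drop (Suc n) \<gamma>)) = origin"
        using l by (simp add: hd_map hd_drop_conv_nth step_self)
      then show "map (step (\<gamma> ! Suc n)) (drop (Suc n) \<gamma>) \<in> walks \<Omega> m"
        using l p pth_tr by (auto simp: walks_iff)
    qed
    show "sigma \<rho> \<phi> \<gamma> \<le> ?F (?h \<gamma>)"
      if g: "\<gamma> \<in> walks \<Omega> (n + m + 1)" for \<gamma>
    proof -
      have l: "length \<gamma> = n + m + 2" "hd \<gamma> = origin" "pth \<Omega> \<gamma>" using g by (auto simp: walks_iff)
      define \<alpha> where "\<alpha> = take (Suc n) \<gamma>"
      define \<beta> where "\<beta> = drop (Suc n) \<gamma>"
      have ne1: "\<alpha> \<noteq> []" "\<beta> \<noteq> []" using l by (auto simp: \<alpha>_def \<beta>_def)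
      have split: "\<gamma> = \<alpha> @ tl (last \<alpha> # \<beta>)" by (simp add: \<alpha>_def \<beta>_def)
      have la: "last \<alpha> = \<gamma> ! n" using l by (simp add: last_take_nth_conv \<alpha>_def)
      have hb: "\<beta> = \<gamma> ! Suc n # drop (Suc (Suc n)) \<gamma>" using l by (simp add: Cons_nth_drop_Suc \<beta>_def)
      have pp: "pth \<Omega> \<alpha> \<and> pth \<Omega> (last \<alpha> # \<beta>)"
        using pth_glue[OF ne1(1), of "last \<alpha> # \<beta>" \<Omega>] split l by simp
      then have pb: "pth \<Omega> \<beta>" using hb by (metis pth.simps(1))
      have "ew \<rho> \<gamma> = ew \<rho> \<alpha> * ew \<rho> (last \<alpha> # \<beta>)"
        using ew_glue[OF ne1(1), of "last \<alpha> # \<beta>" \<rho>] split by simp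
      also have "ew \<rho> (last \<alpha> # \<beta>) = \<rho> (step (\<gamma> ! n) (\<gamma> ! Suc n)) * ew \<rho> \<beta>" using hb la
        by (metis ew.simps(1))
      finally have ewg: "ew \<rho> \<gamma> = ew \<rho> \<alpha> * (\<rho> (step (\<gamma> ! n) (\<gamma> ! Suc n)) * ew \<rho> \<beta>)" .
      have vg: "vt \<phi> \<gamma> \<le> vt \<phi> \<alpha> * vt \<phi> \<beta>"
        using vt_append_le[of \<phi> \<alpha> \<beta>] phi0 phisup by (simp add: \<alpha>_def \<beta>_def)
      have nn: "0 \<le> ew \<rho> \<alpha> * (\<rho> (step (\<gamma> ! n) (\<gamma> ! Suc n)) * ew \<rho> \<beta>)"
        using ewg ew_nonneg[of \<Omega> \<gamma> \<rho>] l rhonn by auto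
      have "sigma \<rho> \<phi> \<gamma> \<le> (vt \<phi> \<alpha> * vt \<phi> \<beta>) * (ew \<rho> \<alpha> * (\<rho> (step (\<gamma> ! n) (\<gamma> ! Suc n)) * ew \<rho> \<beta>))"
        unfolding sigma_eq ewg using vg nn by (rule mult_right_mono)
      also have "\<dots> = sigma \<rho> \<phi> \<alpha> * (\<rho> (step (\<gamma> ! n) (\<gamma> ! Suc n)) * sigma \<rho> \<phi> \<beta>)"
        by (simp add: sigma_eq algebra_simps)
      finally show ?thesis using sigma_tr by (simp add: \<alpha>_def \<beta>_def)
    qed
    show "\<And>y. y \<in> walks \<Omega> n \<times> (\<Omega> \<times> walks \<Omega> m) \<Longrightarrow> 0 \<le> ?F y"
      using sigma_walk_nonneg rhonn by auto
  qed
  also have "\<dots> = Z n * ((\<Sum>v\<in>\<Omega>. \<rho> v) * Z m)" unfolding Z_def Zn_def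
    by (simp add: sum_product sum.cartesian_product case_prod_beta)
  finally show ?thesis using rhosum by simp
qed

end


context poly
begin

definition lam :: real where "lam = lambda0 \<Omega> \<rho> \<phi>"

lemma lam_facts: "(\<lambda>n. ln (Z n) / n) \<longlonglongrightarrow> lam" "\<And>n. Z n \<ge> exp (lam * (n + 1))"
proof -
  obtain e where e: "e \<in> \<Omega>" "xc e > 0" "\<rho> e > 0" using exists_e by blast
  define a where "a k = ln (Z (k - 1))" for k
  have sub: "a (k + l) \<le> a k + a l" if "k \<ge> 1" "l \<ge> 1" for k l
  proof -
    have "k + l - 1 = (k - 1) + (l - 1) + 1" using that by simp
    then have "Z (k + l - 1) \<le> Z (k - 1) * Z (l - 1)" using Z_submult[of "k - 1" "l - 1"] by metis
    then have "ln (Z (k + l - 1)) \<le> ln (Z (k - 1) * Z (l - 1))" using Z_pos by simp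
    moreover have "Z (k - 1) \<noteq> 0" "Z (l - 1) \<noteq> 0" using Z_pos by (metis less_irrefl)+
    ultimately show ?thesis by (simp add: a_def ln_mult)
  qed
  have le0: "ln (\<rho> e) \<le> 0" using rho_le1[OF e(1)] e by simp
  have bnd: "a k \<ge> ln (\<rho> e) * k" if "k \<ge> 1" for k
  proof -
    have "Z (k - 1) \<ge> \<rho> e ^ (k - 1)" by (rule Z_lower_e[OF e(1,2)])
    then have "ln (Z (k - 1)) \<ge> ln (\<rho> e ^ (k - 1))" using e Z_pos by (metis ln_le_cancel_iff zero_less_power)
    also have "ln (\<rho> e ^ (k - 1)) = real (k - 1) * ln (\<rho> e)" using e by (simp add: ln_realpow)
    also have "\<dots> \<ge> ln (\<rho> e) * k"
    proof -
      have "real (k - 1) = real k - 1" using that by simp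
      then have "real (k - 1) * ln (\<rho> e) = ln (\<rho> e) * k - ln (\<rho> e)" by (simp add: algebra_simps)
      then show ?thesis using le0 by linarith
    qed
    finally show ?thesis by (simp add: a_def)
  qed
  define L where "L = Inf ((\<lambda>k. a k / k) ` {1..})"
  have F: "(\<lambda>n. a n / n) \<longlonglongrightarrow> L" "\<And>k. k \<ge> 1 \<Longrightarrow> a k \<ge> L * k"
    using fekete[of a "ln (\<rho> e)"] sub bnd unfolding L_def by auto
  have eq: "ln (Z n) / n = a (Suc n) / (Suc n) * (real (Suc n) / n)" for n
    by (cases "n = 0") (auto simp: a_def)
  have "(\<lambda>n. a (Suc n) / (Suc n) * (real (Suc n) / n)) \<longlonglongrightarrow> L * 1"
    using tendsto_mult[OF LIMSEQ_Suc[OF F(1)] LIMSEQ_Suc_n_over_n] by simp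
  then have T: "(\<lambda>n. ln (Z n) / n) \<longlonglongrightarrow> L" unfolding eq by simp
  then have "lam = L" unfolding lam_def lambda0_def Z_def[symmetric] by (simp add: limI)
  then show "(\<lambda>n. ln (Z n) / n) \<longlonglongrightarrow> lam" using T by simp
  show "Z n \<ge> exp (lam * (n + 1))" for n
  proof -
    have "a (Suc n) \<ge> L * Suc n" using F(2)[of "Suc n"] by simp
    then have "exp (L * (n + 1)) \<le> exp (ln (Z n))" by (simp add: a_def add.commute)
    then show ?thesis using Z_pos \<open>lam = L\<close> by simp
  qed
qed

lemma Z_summable:
  assumes "0 \<le> z" "z < exp (- lam)"
  shows "summable (\<lambda>n. Z n * z ^ n)"
proof (cases "z = 0")
  case True
  then have "(\<lambda>n. Z n * z ^ n) = (\<lambda>n. if n = 0 then Z 0 else 0)" by (auto simp: fun_eq_iff)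
  then show ?thesis by simp
next
  case False
  then have zp: "z > 0" using assms by simp
  then have lz: "ln z < - lam" using assms by (metis exp_ln ln_less_cancel_iff exp_gt_zero ln_exp)
  define \<delta> where "\<delta> = (- lam - ln z) / 2"
  have dp: "\<delta> > 0" using lz by (simp add: \<delta>_def)
  have ev: "eventually (\<lambda>n. ln (Z n) / n < lam + \<delta>) sequentially"
    using lam_facts(1) dp by (intro order_tendstoD) auto
  have ev2: "eventually (\<lambda>n. norm (Z n * z ^ n) \<le> exp (- \<delta>) ^ n) sequentially"
    using ev eventually_gt_at_top[of 0]
  proof eventually_elim
    case (elim n)
    then have "ln (Z n) < n * (lam + \<delta>)" by (simp add: field_simps)
    moreover have "n * (lam + \<delta>) + n * ln z = n * (- \<delta>)" by (simp add: \<delta>_def field_simps)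
    ultimately have "ln (Z n) + n * ln z \<le> n * (- \<delta>)" by linarith
    then have "exp (ln (Z n) + n * ln z) \<le> exp (n * (- \<delta>))" by simp
    moreover have "exp (ln (Z n) + n * ln z) = Z n * z ^ n"
      using Z_pos zp by (simp add: exp_add exp_of_nat_mult)
    moreover have "exp (n * (- \<delta>)) = exp (- \<delta>) ^ n" by (metis exp_of_nat_mult)
    moreover have "Z n * z ^ n \<ge> 0" using Z_pos[of n] zp by simp
    ultimately show ?case by simp
  qed
  have "summable (\<lambda>n. exp (- \<delta>) ^ n)" using dp by (intro summable_geometric) simp
  then show ?thesis using summable_comparison_test_ev[OF ev2] by simp
qed

end


definition cat :: "pt list \<Rightarrow> pt list \<Rightarrow> pt list" where
  "cat \<beta> \<eta> = \<beta> @ tl (map (addp (last \<beta>)) \<eta>)"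

lemma step_addp2: "step (addp c a) (addp c b) = step a b"
  by (auto simp: step_def addp_def)
lemma xc_addp: "xc (addp a v) = xc a + xc v" by (simp add: xc_def addp_def)
lemma addp_origin[simp]: "addp c origin = c" by (simp add: addp_def origin_def)
lemma xc_origin[simp]: "xc origin = 0" by (simp add: xc_def origin_def)
lemma inj_addp: "inj (addp c)" by (auto simp: inj_def addp_def fun_eq_iff)
lemma addp_step_map: "map (addp c) (map (step c) xs) = xs" by (induction xs) auto

lemma pth_take: "pth \<Omega> \<gamma> \<Longrightarrow> pth \<Omega> (take k \<gamma>)"
  unfolding pth_nth by auto
lemma pth_drop: "pth \<Omega> \<gamma> \<Longrightarrow> pth \<Omega> (drop k \<gamma>)"
  unfolding pth_nth by (auto simp: add.commute)

lemma last_len: "length xs = Suc j \<Longrightarrow> last xs = xs ! j"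
  by (metis diff_Suc_1 last_conv_nth length_0_conv nat.distinct(1))

lemma walks_len: "\<gamma> \<in> walks \<Omega> n \<Longrightarrow> length \<gamma> = Suc n" by (simp add: walks_iff)
lemma walks_wlen: "\<gamma> \<in> walks \<Omega> n \<Longrightarrow> wlen \<gamma> = n" by (simp add: walks_iff wlen_def)
lemma walks_0: "\<gamma> \<in> walks \<Omega> n \<Longrightarrow> \<gamma> ! 0 = origin"
  by (simp add: walks_def)

lemma walk_take: "\<gamma> \<in> walks \<Omega> n \<Longrightarrow> t \<le> n \<Longrightarrow> take (Suc t) \<gamma> \<in> walks \<Omega> t"
  by (auto simp: walks_iff pth_take)

lemma walk_drop: "\<gamma> \<in> walks \<Omega> n \<Longrightarrow> t \<le> n \<Longrightarrow> map (step (\<gamma> ! t)) (drop t \<gamma>) \<in> walks \<Omega> (n - t)"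
proof -
  assume g: "\<gamma> \<in> walks \<Omega> n" "t \<le> n"
  then have l: "length \<gamma> = Suc n" "pth \<Omega> \<gamma>" by (auto simp: walks_iff)
  have "pth \<Omega> (map (step (\<gamma> ! t)) (drop t \<gamma>))"
    using pth_map[of "step (\<gamma> ! t)" id] pth_drop[OF l(2)] by (simp add: step_step)
  moreover have "hd (map (step (\<gamma> ! t)) (drop t \<gamma>)) = origin"
    using l g(2) by (simp add: hd_map hd_drop_conv_nth step_self)
  ultimately show ?thesis using l g(2) by (simp add: walks_iff)
qed

lemma cat_len: "\<beta> \<in> walks \<Omega> j \<Longrightarrow> \<eta> \<in> walks \<Omega> m \<Longrightarrow> length (cat \<beta> \<eta>) = Suc (j + m)"
  by (simp add: cat_def walks_iff)

lemma cat_nth1: "\<beta> \<in> walks \<Omega> j \<Longrightarrow> i \<le> j \<Longrightarrow> cat \<beta> \<eta> ! i = \<beta> ! i"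
  by (simp add: cat_def walks_iff nth_append)

lemma cat_nth2: "\<beta> \<in> walks \<Omega> j \<Longrightarrow> \<eta> \<in> walks \<Omega> m \<Longrightarrow> j \<le> i \<Longrightarrow> i \<le> j + m \<Longrightarrow>
    cat \<beta> \<eta> ! i = addp (\<beta> ! j) (\<eta> ! (i - j))"
proof -
  assume a: "\<beta> \<in> walks \<Omega> j" "\<eta> \<in> walks \<Omega> m" "j \<le> i" "i \<le> j + m"
  then have l: "length \<beta> = Suc j" "length \<eta> = Suc m" "\<eta> ! 0 = origin" by (auto simp: walks_iff walks_def)
  have lb: "last \<beta> = \<beta> ! j" using l by (simp add: last_len)
  show ?thesis
  proof (cases "i = j")
    case True then show ?thesis using a cat_nth1[OF a(1), of i] l by simp
  next
    case False
    then have "cat \<beta> \<eta> ! i = tl (map (addp (last \<beta>)) \<eta>) ! (i - Suc j)"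
      using a l by (simp add: cat_def nth_append)
    also have "\<dots> = addp (last \<beta>) (\<eta> ! Suc (i - Suc j))" using a l False by (simp add: nth_tl)
    finally show ?thesis using False a lb by (simp add: Suc_diff_Suc)
  qed
qed

lemma walk_cat: "\<beta> \<in> walks \<Omega> j \<Longrightarrow> \<eta> \<in> walks \<Omega> m \<Longrightarrow> cat \<beta> \<eta> \<in> walks \<Omega> (j + m)"
proof -
  assume a: "\<beta> \<in> walks \<Omega> j" "\<eta> \<in> walks \<Omega> m"
  then have l: "length \<beta> = Suc j" "length \<eta> = Suc m" "hd \<beta> = origin" "hd \<eta> = origin" "pth \<Omega> \<beta>" "pth \<Omega> \<eta>"
    by (auto simp: walks_iff)
  have ne: "\<beta> \<noteq> []" "map (addp (last \<beta>)) \<eta> \<noteq> []" using l by auto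
  have h: "last \<beta> = hd (map (addp (last \<beta>)) \<eta>)" using l ne by (simp add: hd_map)
  have "pth \<Omega> (map (addp (last \<beta>)) \<eta>)" using pth_map[of "addp (last \<beta>)" id] l by (simp add: step_addp2)
  then have "pth \<Omega> (cat \<beta> \<eta>)" unfolding cat_def using pth_glue[OF ne h] l by simp
  moreover have "hd (cat \<beta> \<eta>) = origin" using l ne by (simp add: cat_def)
  ultimately show ?thesis using cat_len[OF a] by (simp add: walks_iff)
qed

lemma cat_take: "\<beta> \<in> walks \<Omega> j \<Longrightarrow> take (Suc j) (cat \<beta> \<eta>) = \<beta>"
  by (simp add: cat_def walks_iff)

lemma cat_drop: "\<beta> \<in> walks \<Omega> j \<Longrightarrow> \<eta> \<in> walks \<Omega> m \<Longrightarrow> map (step (cat \<beta> \<eta> ! j)) (drop j (cat \<beta> \<eta>)) = \<eta>"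
proof -
  assume a: "\<beta> \<in> walks \<Omega> j" "\<eta> \<in> walks \<Omega> m"
  then have l: "length \<beta> = Suc j" "length \<eta> = Suc m" "hd \<eta> = origin" by (auto simp: walks_iff)
  have c: "cat \<beta> \<eta> ! j = last \<beta>" using cat_nth1[OF a(1), of j] l by (simp add: last_len)
  have "drop j (cat \<beta> \<eta>) = last \<beta> # tl (map (addp (last \<beta>)) \<eta>)"
  proof -
    have "drop j \<beta> = [\<beta> ! j]" using l Cons_nth_drop_Suc[of j \<beta>] by simp
    then show ?thesis using l by (simp add: cat_def last_len)
  qed
  also have "\<dots> = map (addp (last \<beta>)) \<eta>" using l by (cases \<eta>) auto
  finally show ?thesis using c by (simp add: comp_def)
qed

lemma cat_split: "\<gamma> \<in> walks \<Omega> n \<Longrightarrow> t \<le> n \<Longrightarrow> cat (take (Suc t) \<gamma>) (map (step (\<gamma> ! t)) (drop t \<gamma>)) = \<gamma>"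
proof -
  assume a: "\<gamma> \<in> walks \<Omega> n" "t \<le> n"
  then have l: "length \<gamma> = Suc n" by (simp add: walks_iff)
  have lt: "last (take (Suc t) \<gamma>) = \<gamma> ! t" using l a by (simp add: last_take_nth_conv)
  have "tl (map (addp (\<gamma> ! t)) (map (step (\<gamma> ! t)) (drop t \<gamma>))) = tl (drop t \<gamma>)"
    by (simp only: addp_step_map)
  also have "\<dots> = drop (Suc t) \<gamma>" by (simp add: drop_Suc tl_drop)
  finally show ?thesis unfolding cat_def lt by simp
qed

context poly
begin

lemma sigma_addp: "sigma \<rho> \<phi> (map (addp c) \<eta>) = sigma \<rho> \<phi> \<eta>"
  unfolding sigma_eq using ew_map[of "addp c" id] vt_map_inj[OF inj_addp] by (simp add: step_addp2)

lemma bridge_iff: "bridge \<Omega> n \<gamma> \<longleftrightarrow> \<gamma> \<in> walks \<Omega> n \<and> n \<ge> 1 \<and> (\<forall>i\<in>{1..n}. 0 < xc (\<gamma> ! i) \<and> xc (\<gamma> ! i) \<le> xc (\<gamma> ! n))"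
  unfolding bridge_def by (auto simp: walks_0)

lemma renewal_iff: "\<gamma> \<in> walks \<Omega> n \<Longrightarrow> renewal_time \<gamma> i \<longleftrightarrow> 1 \<le> i \<and> i < n \<and>
   (\<forall>k. i < k \<and> k \<le> n \<longrightarrow> xc (\<gamma> ! i) < xc (\<gamma> ! k)) \<and> (\<forall>k<i. xc (\<gamma> ! k) \<le> xc (\<gamma> ! i))"
  unfolding renewal_time_def by (auto simp: walks_wlen)

definition brs :: "nat \<Rightarrow> pt list set" where "brs n = {\<gamma>. bridge \<Omega> n \<gamma>}"
definition irs :: "nat \<Rightarrow> pt list set" where "irs n = {\<gamma>. bridge \<Omega> n \<gamma> \<and> \<not> (\<exists>i. renewal_time \<gamma> i)}"
definition rrs :: "nat \<Rightarrow> pt list set" where "rrs n = {\<gamma>. bridge \<Omega> n \<gamma> \<and> (\<exists>i. renewal_time \<gamma> i)}"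
definition bsum :: "nat \<Rightarrow> real" where "bsum n = (\<Sum>\<gamma>\<in>brs n. sigma \<rho> \<phi> \<gamma>)"
definition isum :: "nat \<Rightarrow> real" where "isum n = (\<Sum>\<gamma>\<in>irs n. sigma \<rho> \<phi> \<gamma>)"

lemma brs_walks: "brs n \<subseteq> walks \<Omega> n" by (auto simp: brs_def bridge_def)
lemma finite_brs: "finite (brs n)" using finite_subset[OF brs_walks finite_walks] .
lemma finite_irs: "finite (irs n)" using finite_subset[of "irs n" "brs n"] finite_brs by (auto simp: irs_def brs_def)
lemma finite_rrs: "finite (rrs n)" using finite_subset[of "rrs n" "brs n"] finite_brs by (auto simp: rrs_def brs_def)

lemma bsum_split: "bsum n = isum n + (\<Sum>\<gamma>\<in>rrs n. sigma \<rho> \<phi> \<gamma>)"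
proof -
  have "brs n = irs n \<union> rrs n" "irs n \<inter> rrs n = {}" by (auto simp: brs_def irs_def rrs_def)
  then show ?thesis unfolding bsum_def isum_def using finite_irs finite_rrs by (simp add: sum.union_disjoint)
qed

lemma bsum_nonneg: "bsum n \<ge> 0" unfolding bsum_def using brs_walks sigma_walk_nonneg by (auto intro!: sum_nonneg)
lemma isum_nonneg: "isum n \<ge> 0" unfolding isum_def using sigma_walk_nonneg by (auto intro!: sum_nonneg simp: irs_def bridge_def)

lemma sigma_cat:
  assumes b: "bridge \<Omega> j \<beta>" and e: "bridge \<Omega> m \<eta>"
  shows "sigma \<rho> \<phi> (cat \<beta> \<eta>) = sigma \<rho> \<phi> \<beta> * sigma \<rho> \<phi> \<eta>"
proof -
  have w: "\<beta> \<in> walks \<Omega> j" "\<eta> \<in> walks \<Omega> m" using b e by (auto simp: bridge_def)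
  then have l: "length \<beta> = Suc j" "length \<eta> = Suc m" "hd \<eta> = origin" "pth \<Omega> \<beta>" "pth \<Omega> \<eta>"
    by (auto simp: walks_iff)
  let ?e = "map (addp (last \<beta>)) \<eta>"
  have ne: "\<beta> \<noteq> []" "?e \<noteq> []" using l by auto
  have h: "last \<beta> = hd ?e" using l ne by (simp add: hd_map)
  have lb: "last \<beta> = \<beta> ! j" using l by (simp add: last_len)
  have xe: "xc (?e ! k) = xc (\<beta> ! j) + xc (\<eta> ! k)" if "k < Suc m" for k
    using that l lb by (simp add: xc_addp)
  have tl_gt: "xc (\<beta> ! j) < xc p" if pin: "p \<in> set (tl ?e)" for p
  proof -
    obtain k where k: "k < length (tl ?e)" "p = tl ?e ! k" using pin unfolding in_set_conv_nth by metis
    then have "p = ?e ! Suc k" "Suc k < Suc m" using l by (auto simp: nth_tl)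
    moreover have "0 < xc (\<eta> ! Suc k)" using e calculation(2) by (auto simp: bridge_iff)
    ultimately show ?thesis using xe by simp
  qed
  have b_le: "xc p \<le> xc (\<beta> ! j)" if pin: "p \<in> set \<beta>" for p
  proof -
    obtain k where k: "k < length \<beta>" "p = \<beta> ! k" using pin unfolding in_set_conv_nth by metis
    show ?thesis
    proof (cases "k = 0")
      case True
      then have "xc p = 0" using k walks_0[OF w(1)] by simp
      moreover have "0 < xc (\<beta> ! j)" using b by (auto simp: bridge_iff)
      ultimately show ?thesis by simp
    next
      case False then show ?thesis using k b l by (auto simp: bridge_iff)
    qed
  qed
  have disj: "set \<beta> \<inter> set (tl ?e) = {}" using tl_gt b_le by force
  have hd_notin: "hd ?e \<notin> set (tl ?e)" using tl_gt h lb by fastforce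
  have "vt \<phi> (cat \<beta> \<eta>) = vt \<phi> \<beta> * vt \<phi> ?e"
    unfolding cat_def by (rule vt_glue_eq[OF phi0 phi1 hd_notin ne(2) disj])
  moreover have "ew \<rho> (cat \<beta> \<eta>) = ew \<rho> \<beta> * ew \<rho> ?e"
    unfolding cat_def by (rule ew_glue[OF ne h])
  ultimately have "sigma \<rho> \<phi> (cat \<beta> \<eta>) = sigma \<rho> \<phi> \<beta> * sigma \<rho> \<phi> ?e" by (simp add: sigma_eq)
  then show ?thesis using sigma_addp by simp
qed

end


context poly
begin

lemma xc_stepd: "xc (step a b) = xc b - xc a" by (simp add: xc_step)

lemma decomp:
  assumes g: "\<gamma> \<in> rrs n" and t: "t = (LEAST i. renewal_time \<gamma> i)"
  shows "1 \<le> t" "t < n" "take (Suc t) \<gamma> \<in> irs t" "map (step (\<gamma> ! t)) (drop t \<gamma>) \<in> brs (n - t)"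
proof -
  have br: "bridge \<Omega> n \<gamma>" and ex: "\<exists>i. renewal_time \<gamma> i" using g by (auto simp: rrs_def)
  have w: "\<gamma> \<in> walks \<Omega> n" using br by (simp add: bridge_def)
  have B: "\<And>i. 1 \<le> i \<Longrightarrow> i \<le> n \<Longrightarrow> 0 < xc (\<gamma> ! i) \<and> xc (\<gamma> ! i) \<le> xc (\<gamma> ! n)" using br by (auto simp: bridge_iff)
  have rt: "renewal_time \<gamma> t" using ex t by (metis LeastI_ex)
  then have R: "1 \<le> t" "t < n" "\<And>k. t < k \<Longrightarrow> k \<le> n \<Longrightarrow> xc (\<gamma> ! t) < xc (\<gamma> ! k)" "\<And>k. k < t \<Longrightarrow> xc (\<gamma> ! k) \<le> xc (\<gamma> ! t)"
    using renewal_iff[OF w] by auto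
  show "1 \<le> t" "t < n" using R by auto
  define \<beta> where "\<beta> = take (Suc t) \<gamma>"
  have wb: "\<beta> \<in> walks \<Omega> t" using walk_take[OF w] R by (simp add: \<beta>_def)
  have bn: "\<beta> ! i = \<gamma> ! i" if "i \<le> t" for i using that by (simp add: \<beta>_def)
  have bb: "bridge \<Omega> t \<beta>"
    unfolding bridge_iff using wb R B bn
    by (auto, metis R(2) le_eq_less_or_eq le_trans less_imp_le_nat order_refl)
  have nr: "\<not> renewal_time \<beta> s" for s
  proof
    assume "renewal_time \<beta> s"
    then have S: "1 \<le> s" "s < t" "\<And>k. s < k \<Longrightarrow> k \<le> t \<Longrightarrow> xc (\<beta> ! s) < xc (\<beta> ! k)" "\<And>k. k < s \<Longrightarrow> xc (\<beta> ! k) \<le> xc (\<beta> ! s)"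
      using renewal_iff[OF wb] by auto
    have "renewal_time \<gamma> s"
      unfolding renewal_iff[OF w]
    proof (intro conjI allI impI)
      show "1 \<le> s" "s < n" using S R by auto
      fix k
      show "k < s \<Longrightarrow> xc (\<gamma> ! k) \<le> xc (\<gamma> ! s)" using S(4)[of k] S(2) bn[of k] bn[of s] by simp
      assume k: "s < k \<and> k \<le> n"
      show "xc (\<gamma> ! s) < xc (\<gamma> ! k)"
      proof (cases "k \<le> t")
        case True then show ?thesis using S(3)[of k] k bn[of k] bn[of s] S(2) by simp
      next
        case False
        have "xc (\<gamma> ! s) < xc (\<gamma> ! t)" using S(3)[of t] S(2) bn[of t] bn[of s] by simp
        also have "\<dots> < xc (\<gamma> ! k)" using R(3)[of k] False k by simp
        finally show ?thesis .
      qed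
    qed
    then have "t \<le> s" using t by (simp add: Least_le)
    then show False using S by simp
  qed
  show "take (Suc t) \<gamma> \<in> irs t" using bb nr by (simp add: irs_def \<beta>_def)
  define \<eta> where "\<eta> = map (step (\<gamma> ! t)) (drop t \<gamma>)"
  have we: "\<eta> \<in> walks \<Omega> (n - t)" using walk_drop[OF w] R by (simp add: \<eta>_def)
  have l: "length \<gamma> = Suc n" using w by (simp add: walks_iff)
  have en: "xc (\<eta> ! k) = xc (\<gamma> ! (t + k)) - xc (\<gamma> ! t)" if "k \<le> n - t" for k
    using that l R by (simp add: \<eta>_def xc_step)
  have "bridge \<Omega> (n - t) \<eta>"
    unfolding bridge_iff
  proof (intro conjI ballI)
    show "\<eta> \<in> walks \<Omega> (n - t)" "1 \<le> n - t" using we R by auto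
    fix k assume k: "k \<in> {1..n - t}"
    show "0 < xc (\<eta> ! k)" using en[of k] R(3)[of "t + k"] k by auto
    show "xc (\<eta> ! k) \<le> xc (\<eta> ! (n - t))" using en[of k] en[of "n - t"] B[of "t + k"] k R by auto
  qed
  then show "map (step (\<gamma> ! t)) (drop t \<gamma>) \<in> brs (n - t)" by (simp add: brs_def \<eta>_def)
qed

lemma compose:
  assumes j: "1 \<le> j" "j < n" and b: "\<beta> \<in> irs j" and e: "\<eta> \<in> brs (n - j)"
  shows "cat \<beta> \<eta> \<in> rrs n" "(LEAST i. renewal_time (cat \<beta> \<eta>) i) = j"
proof -
  define m where "m = n - j"
  have bb: "bridge \<Omega> j \<beta>" and nr: "\<And>s. \<not> renewal_time \<beta> s" using b by (auto simp: irs_def)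
  have eb: "bridge \<Omega> m \<eta>" using e by (simp add: brs_def m_def)
  have wb: "\<beta> \<in> walks \<Omega> j" and we: "\<eta> \<in> walks \<Omega> m" using bb eb by (auto simp: bridge_def)
  have nm: "n = j + m" using j by (simp add: m_def)
  define \<gamma> where "\<gamma> = cat \<beta> \<eta>"
  have w: "\<gamma> \<in> walks \<Omega> n" using walk_cat[OF wb we] nm by (simp add: \<gamma>_def)
  have g1: "xc (\<gamma> ! i) = xc (\<beta> ! i)" if "i \<le> j" for i using cat_nth1[OF wb that] by (simp add: \<gamma>_def)
  have g2: "xc (\<gamma> ! i) = xc (\<beta> ! j) + xc (\<eta> ! (i - j))" if "j \<le> i" "i \<le> n" for i
    using cat_nth2[OF wb we that(1)] that nm by (simp add: \<gamma>_def xc_addp)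
  have Bb: "\<And>i. 1 \<le> i \<Longrightarrow> i \<le> j \<Longrightarrow> 0 < xc (\<beta> ! i) \<and> xc (\<beta> ! i) \<le> xc (\<beta> ! j)" using bb by (auto simp: bridge_iff)
  have Be: "\<And>i. 1 \<le> i \<Longrightarrow> i \<le> m \<Longrightarrow> 0 < xc (\<eta> ! i) \<and> xc (\<eta> ! i) \<le> xc (\<eta> ! m)" using eb by (auto simp: bridge_iff)
  have m1: "1 \<le> m" using j by (simp add: m_def)
  have b0: "xc (\<beta> ! 0) = 0" using walks_0[OF wb] by simp
  have e0: "xc (\<eta> ! 0) = 0" using walks_0[OF we] by simp
  have bj: "0 < xc (\<beta> ! j)" using Bb[of j] j by simp
  have em: "0 < xc (\<eta> ! m)" using Be[of m] m1 by simp
  have P: "0 < xc (\<gamma> ! i) \<and> xc (\<gamma> ! i) \<le> xc (\<gamma> ! n)" if i: "i \<in> {1..n}" for i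
  proof -
    have gn: "xc (\<gamma> ! n) = xc (\<beta> ! j) + xc (\<eta> ! m)" using g2[of n] j nm by simp
    show "0 < xc (\<gamma> ! i) \<and> xc (\<gamma> ! i) \<le> xc (\<gamma> ! n)"
    proof (cases "i \<le> j")
      case True then show ?thesis using g1[of i] Bb[of i] i gn em by auto
    next
      case False
      have "1 \<le> i - j" "i - j \<le> m" using False i nm by auto
      then show ?thesis using g2[of i] Be[of "i - j"] i gn bj nm False by auto
    qed
  qed
  have brg: "bridge \<Omega> n \<gamma>" unfolding bridge_iff using w j P by auto
  have rj: "renewal_time \<gamma> j"
    unfolding renewal_iff[OF w]
  proof (intro conjI allI impI)
    show "1 \<le> j" "j < n" using j by auto
    fix k
    show "j < k \<and> k \<le> n \<Longrightarrow> xc (\<gamma> ! j) < xc (\<gamma> ! k)"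
      using g2[of k] g1[of j] Be[of "k - j"] nm by auto
    show "k < j \<Longrightarrow> xc (\<gamma> ! k) \<le> xc (\<gamma> ! j)"
      using g1[of k] g1[of j] Bb[of k] b0 bj by (cases "k = 0") auto
  qed
  then show "cat \<beta> \<eta> \<in> rrs n" using brg by (auto simp: rrs_def \<gamma>_def)
  have "(LEAST i. renewal_time \<gamma> i) = j"
  proof (rule Least_equality)
    show "renewal_time \<gamma> j" by (rule rj)
    fix s assume rs: "renewal_time \<gamma> s"
    show "j \<le> s"
    proof (rule ccontr)
      assume "\<not> j \<le> s"
      then have sj: "s < j" by simp
      have S: "1 \<le> s" "\<And>k. s < k \<Longrightarrow> k \<le> n \<Longrightarrow> xc (\<gamma> ! s) < xc (\<gamma> ! k)" "\<And>k. k < s \<Longrightarrow> xc (\<gamma> ! k) \<le> xc (\<gamma> ! s)"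
        using rs renewal_iff[OF w] by auto
      have "renewal_time \<beta> s"
        unfolding renewal_iff[OF wb]
      proof (intro conjI allI impI)
        show "1 \<le> s" "s < j" using S sj by auto
        fix k
        show "s < k \<and> k \<le> j \<Longrightarrow> xc (\<beta> ! s) < xc (\<beta> ! k)" using S(2)[of k] g1[of k] g1[of s] sj j by auto
        show "k < s \<Longrightarrow> xc (\<beta> ! k) \<le> xc (\<beta> ! s)" using S(3)[of k] g1[of k] g1[of s] sj by auto
      qed
      then show False using nr by simp
    qed
  qed
  then show "(LEAST i. renewal_time (cat \<beta> \<eta>) i) = j" by (simp add: \<gamma>_def)
qed

lemma renewal_eq: "bsum n = isum n + (\<Sum>j\<in>{1..<n}. isum j * bsum (n - j))"
proof -
  define T where "T = (SIGMA j:{1..<n}. irs j \<times> brs (n - j))"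
  define tt where "tt \<gamma> = (LEAST i. renewal_time \<gamma> i)" for \<gamma>
  define jj where "jj \<gamma> = (tt \<gamma>, take (Suc (tt \<gamma>)) \<gamma>, map (step (\<gamma> ! tt \<gamma>)) (drop (tt \<gamma>) \<gamma>))" for \<gamma>
  define ii where "ii b = cat (fst (snd b)) (snd (snd b))" for b :: "nat \<times> pt list \<times> pt list"
  define h where "h b = sigma \<rho> \<phi> (fst (snd b)) * sigma \<rho> \<phi> (snd (snd b))" for b :: "nat \<times> pt list \<times> pt list"
  have "(\<Sum>\<gamma>\<in>rrs n. sigma \<rho> \<phi> \<gamma>) = (\<Sum>b\<in>T. h b)"
  proof (rule sum.reindex_bij_witness[where i=ii and j=jj])
    fix \<gamma> assume g: "\<gamma> \<in> rrs n"
    have D: "1 \<le> tt \<gamma>" "tt \<gamma> < n" "take (Suc (tt \<gamma>)) \<gamma> \<in> irs (tt \<gamma>)" "map (step (\<gamma> ! tt \<gamma>)) (drop (tt \<gamma>) \<gamma>) \<in> brs (n - tt \<gamma>)"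
      using decomp[OF g] by (auto simp: tt_def)
    have w: "\<gamma> \<in> walks \<Omega> n" using g by (auto simp: rrs_def bridge_def)
    show "ii (jj \<gamma>) = \<gamma>" using cat_split[OF w] D by (simp add: ii_def jj_def)
    show "jj \<gamma> \<in> T" using D by (simp add: T_def jj_def)
    have "sigma \<rho> \<phi> (cat (take (Suc (tt \<gamma>)) \<gamma>) (map (step (\<gamma> ! tt \<gamma>)) (drop (tt \<gamma>) \<gamma>)))
      = h (jj \<gamma>)"
      using sigma_cat[of "tt \<gamma>" "take (Suc (tt \<gamma>)) \<gamma>" "n - tt \<gamma>"] D by (simp add: h_def jj_def irs_def brs_def)
    then show "h (jj \<gamma>) = sigma \<rho> \<phi> \<gamma>" using cat_split[OF w] D by simp
  next
    fix b assume b: "b \<in> T"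
    then obtain j \<beta> \<eta> where bb: "b = (j, \<beta>, \<eta>)" "1 \<le> j" "j < n" "\<beta> \<in> irs j" "\<eta> \<in> brs (n - j)"
      by (auto simp: T_def)
    note C = compose[OF bb(2-5)]
    show "ii b \<in> rrs n" using C bb by (simp add: ii_def)
    have wb: "\<beta> \<in> walks \<Omega> j" "\<eta> \<in> walks \<Omega> (n - j)" using bb by (auto simp: irs_def brs_def bridge_def)
    show "jj (ii b) = b" using C(2) bb cat_take[OF wb(1)] cat_drop[OF wb]
      by (simp add: ii_def jj_def tt_def)
  qed
  also have "\<dots> = (\<Sum>j\<in>{1..<n}. \<Sum>p\<in>irs j \<times> brs (n - j). h (j, p))"
    unfolding T_def using sum.Sigma[of "{1..<n}" "\<lambda>j. irs j \<times> brs (n - j)" "\<lambda>j p. h (j, p)"] finite_irs finite_brs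
    by (simp add: case_prod_beta)
  also have "\<dots> = (\<Sum>j\<in>{1..<n}. isum j * bsum (n - j))"
    unfolding h_def isum_def bsum_def
    by (simp add: sum_product sum.cartesian_product case_prod_beta)
  finally show ?thesis using bsum_split by simp
qed

end


definition lastmax :: "(nat \<Rightarrow> int) \<Rightarrow> nat \<Rightarrow> nat" where
  "lastmax f n = Max {i. i \<le> n \<and> (\<forall>k\<le>n. f k \<le> f i)}"

lemma lastmax:
  shows "lastmax f n \<le> n" "\<And>k. k \<le> n \<Longrightarrow> f k \<le> f (lastmax f n)"
    "\<And>k. lastmax f n < k \<Longrightarrow> k \<le> n \<Longrightarrow> f k < f (lastmax f n)"
proof -
  let ?S = "{i. i \<le> n \<and> (\<forall>k\<le>n. f k \<le> f i)}"
  have fin: "finite ?S" by (rule finite_subset[of _ "{..n}"]) auto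
  have "Max (f ` {..n}) \<in> f ` {..n}" by (rule Max_in) auto
  then obtain i where i: "i \<le> n" "f i = Max (f ` {..n})" by (metis atMost_iff imageE)
  have "\<forall>k\<le>n. f k \<le> f i" using i by simp
  then have ne: "?S \<noteq> {}" using i by blast
  have M: "lastmax f n \<in> ?S" unfolding lastmax_def using Max_in[OF fin ne] .
  then show "lastmax f n \<le> n" "\<And>k. k \<le> n \<Longrightarrow> f k \<le> f (lastmax f n)" by auto
  fix k assume k: "lastmax f n < k" "k \<le> n"
  show "f k < f (lastmax f n)"
  proof (rule ccontr)
    assume "\<not> f k < f (lastmax f n)"
    then have "k \<in> ?S" using M k by force
    then have "k \<le> lastmax f n" unfolding lastmax_def using Max_ge[OF fin] by blast
    then show False using k by simp
  qed
qed

lemma conv_le: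
  fixes f g :: "nat \<Rightarrow> real"
  assumes "\<And>n. f n \<ge> 0" "\<And>n. g n \<ge> 0"
  shows "(\<Sum>n\<le>N. \<Sum>j\<le>n. f j * g (n - j)) \<le> (\<Sum>j\<le>N. f j) * (\<Sum>l\<le>N. g l)"
proof -
  have "(\<Sum>n\<le>N. \<Sum>j\<le>n. f j * g (n - j)) = (\<Sum>(i, j)\<in>{(i, j). i + j \<le> N}. f i * g j)"
    by (rule sum.triangle_reindex_eq[symmetric])
  also have "\<dots> \<le> (\<Sum>(i, j)\<in>{..N} \<times> {..N}. f i * g j)"
    by (rule sum_mono2) (auto intro: mult_nonneg_nonneg assms)
  also have "\<dots> = (\<Sum>j\<le>N. f j) * (\<Sum>l\<le>N. g l)"
    by (simp add: sum_product sum.cartesian_product)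
  finally show ?thesis .
qed

lemma conv_ge:
  fixes f g :: "nat \<Rightarrow> real"
  assumes "\<And>n. f n \<ge> 0" "\<And>n. g n \<ge> 0"
  shows "(\<Sum>n\<le>2*N. \<Sum>j\<le>n. f j * g (n - j)) \<ge> (\<Sum>j\<le>N. f j) * (\<Sum>l\<le>N. g l)"
proof -
  have "(\<Sum>n\<le>2*N. \<Sum>j\<le>n. f j * g (n - j)) = (\<Sum>(i, j)\<in>{(i, j). i + j \<le> 2*N}. f i * g j)"
    by (rule sum.triangle_reindex_eq[symmetric])
  also have "\<dots> \<ge> (\<Sum>(i, j)\<in>{..N} \<times> {..N}. f i * g j)"
  proof (rule sum_mono2)
    show "finite {(i, j). i + j \<le> 2 * N}"
      by (rule finite_subset[of _ "{..2*N} \<times> {..2*N}"]) auto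
  qed (auto intro: mult_nonneg_nonneg assms)
  also have "(\<Sum>(i, j)\<in>{..N} \<times> {..N}. f i * g j) = (\<Sum>j\<le>N. f j) * (\<Sum>l\<le>N. g l)"
    by (simp add: sum_product sum.cartesian_product)
  finally show ?thesis .
qed

lemma refl0_origin[simp]: "refl0 origin = origin" by (auto simp: refl0_def origin_def)

context poly
begin

definition hs :: "nat \<Rightarrow> pt list set" where
  "hs n = {\<gamma>\<in>walks \<Omega> n. \<forall>i\<in>{1..n}. 0 < xc (\<gamma> ! i)}"
definition hss :: "nat \<Rightarrow> nat \<Rightarrow> pt list set" where
  "hss n s = {\<gamma>\<in>hs n. \<forall>i\<le>n. xc (\<gamma> ! i) \<le> int s}"
definition brk :: "nat \<Rightarrow> nat \<Rightarrow> pt list set" where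
  "brk n k = {\<gamma>\<in>brs n. xc (\<gamma> ! n) = int k}"
definition hsum :: "nat \<Rightarrow> nat \<Rightarrow> real" where "hsum n s = (\<Sum>\<gamma>\<in>hss n s. sigma \<rho> \<phi> \<gamma>)"
definition hsA :: "nat \<Rightarrow> real" where "hsA n = (\<Sum>\<gamma>\<in>hs n. sigma \<rho> \<phi> \<gamma>)"
definition bk :: "nat \<Rightarrow> nat \<Rightarrow> real" where "bk n k = (\<Sum>\<gamma>\<in>brk n k. sigma \<rho> \<phi> \<gamma>)"

lemma finite_hs: "finite (hs n)" by (rule finite_subset[OF _ finite_walks]) (auto simp: hs_def)
lemma finite_hss: "finite (hss n s)" by (rule finite_subset[OF _ finite_hs]) (auto simp: hss_def)
lemma finite_brk: "finite (brk n k)" by (rule finite_subset[OF _ finite_brs]) (auto simp: brk_def)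
lemma hsum_nonneg: "hsum n s \<ge> 0" unfolding hsum_def by (auto intro!: sum_nonneg sigma_walk_nonneg simp: hss_def hs_def)
lemma hsA_nonneg: "hsA n \<ge> 0" unfolding hsA_def by (auto intro!: sum_nonneg sigma_walk_nonneg simp: hs_def)
lemma bk_nonneg: "bk n k \<ge> 0" unfolding bk_def by (auto intro!: sum_nonneg sigma_walk_nonneg simp: brk_def brs_def bridge_def)

lemma hsum0: "hsum 0 s \<le> 1"
proof -
  have "hss 0 s \<subseteq> {[origin]}" by (auto simp: hss_def hs_def walks_iff length_Suc_conv)
  moreover have "sigma \<rho> \<phi> [origin] = 1" using phi1 by (simp add: sigma_eq vt_def visits_def)
  ultimately show ?thesis unfolding hsum_def
    using sum_mono2[of "{[origin]}" "hss 0 s" "sigma \<rho> \<phi>"] by simp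
qed

lemma walk_reflect:
  assumes w: "\<gamma> \<in> walks \<Omega> n" "t \<le> n"
  shows "map (\<lambda>p. refl0 (step (\<gamma> ! t) p)) (drop t \<gamma>) \<in> walks \<Omega> (n - t)"
    "\<And>i. i \<le> n - t \<Longrightarrow> xc (map (\<lambda>p. refl0 (step (\<gamma> ! t) p)) (drop t \<gamma>) ! i) = xc (\<gamma> ! t) - xc (\<gamma> ! (t + i))"
    "sigma \<rho> \<phi> (map (\<lambda>p. refl0 (step (\<gamma> ! t) p)) (drop t \<gamma>)) = sigma \<rho> \<phi> (drop t \<gamma>)"
proof -
  have l: "length \<gamma> = Suc n" "pth \<Omega> \<gamma>" using w by (auto simp: walks_iff)
  have "hd (map (\<lambda>p. refl0 (step (\<gamma> ! t) p)) (drop t \<gamma>)) = origin"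
    using l w(2) by (simp add: hd_map hd_drop_conv_nth step_self)
  then show "map (\<lambda>p. refl0 (step (\<gamma> ! t) p)) (drop t \<gamma>) \<in> walks \<Omega> (n - t)"
    using l w(2) pth_refl0 pth_drop by (simp add: walks_iff)
  show "\<And>i. i \<le> n - t \<Longrightarrow> xc (map (\<lambda>p. refl0 (step (\<gamma> ! t) p)) (drop t \<gamma>) ! i) = xc (\<gamma> ! t) - xc (\<gamma> ! (t + i))"
    using l w(2) by (simp add: xc_refl0 xc_step)
  show "sigma \<rho> \<phi> (map (\<lambda>p. refl0 (step (\<gamma> ! t) p)) (drop t \<gamma>)) = sigma \<rho> \<phi> (drop t \<gamma>)"
    using sigma_refl pth_drop l by simp
qed

lemma sigma_split_le:
  assumes w: "\<gamma> \<in> walks \<Omega> n" "t \<le> n"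
    and gt: "\<And>k. t < k \<Longrightarrow> k \<le> n \<Longrightarrow> \<gamma> ! k \<noteq> \<gamma> ! t"
  shows "sigma \<rho> \<phi> \<gamma> \<le> sigma \<rho> \<phi> (take (Suc t) \<gamma>) * sigma \<rho> \<phi> (drop t \<gamma>)"
proof -
  have l: "length \<gamma> = Suc n" "pth \<Omega> \<gamma>" using w by (auto simp: walks_iff)
  define \<alpha> where "\<alpha> = take (Suc t) \<gamma>"
  define D where "D = drop t \<gamma>"
  have ne: "\<alpha> \<noteq> []" "D \<noteq> []" using l w by (auto simp: \<alpha>_def D_def)
  have hD: "hd D = \<gamma> ! t" using l w by (simp add: D_def hd_drop_conv_nth)
  have la: "last \<alpha> = hd D" using l w hD by (simp add: \<alpha>_def last_take_nth_conv)
  have split: "\<gamma> = \<alpha> @ tl D" unfolding \<alpha>_def D_def by (metis append_take_drop_id drop_Suc tl_drop)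
  have "hd D \<notin> set (tl D)"
  proof
    assume "hd D \<in> set (tl D)"
    then obtain k where k: "k < length (tl D)" "tl D ! k = hd D" unfolding in_set_conv_nth by metis
    then have "\<gamma> ! (Suc t + k) = \<gamma> ! t" using l w hD by (simp add: D_def nth_tl)
    moreover have "t < Suc t + k" "Suc t + k \<le> n" using k l w by (auto simp: D_def)
    ultimately show False using gt by metis
  qed
  then have "vt \<phi> \<gamma> \<le> vt \<phi> \<alpha> * vt \<phi> D" using vt_glue_le[OF phi0 phi1 phisup _ ne(2)] split by metis
  moreover have "ew \<rho> \<gamma> = ew \<rho> \<alpha> * ew \<rho> D" using ew_glue[OF ne(1,2) la] split by simp
  moreover have "ew \<rho> D \<ge> 0" "ew \<rho> \<alpha> \<ge> 0" using ew_nonneg[OF pth_drop[OF l(2)], of \<rho>] ew_nonneg[OF pth_take[OF l(2)], of \<rho>] rhonn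
    by (auto simp: D_def \<alpha>_def)
  ultimately have "vt \<phi> \<gamma> * (ew \<rho> \<alpha> * ew \<rho> D) \<le> (vt \<phi> \<alpha> * vt \<phi> D) * (ew \<rho> \<alpha> * ew \<rho> D)"
    by (intro mult_right_mono) auto
  then have "sigma \<rho> \<phi> \<gamma> \<le> (vt \<phi> \<alpha> * vt \<phi> D) * (ew \<rho> \<alpha> * ew \<rho> D)"
    unfolding sigma_eq using ew_glue[OF ne(1,2) la] split by simp
  then show ?thesis by (simp add: sigma_eq \<alpha>_def D_def algebra_simps)
qed

lemma hw_core:
  assumes n: "n \<ge> 1"
  shows "hsum n s \<le> (\<Sum>k\<in>{1..s}. \<Sum>j\<in>{1..n}. bk j k * hsum (n - j) (k - 1))"
proof -
  define T where "T = (SIGMA k:{1..s}. SIGMA j:{1..n}. brk j k \<times> hss (n - j) (k - 1))"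
  define tt where "tt \<gamma> = lastmax (\<lambda>i. xc (\<gamma> ! i)) n" for \<gamma>
  define hm where "hm \<gamma> = (nat (xc (\<gamma> ! tt \<gamma>)), tt \<gamma>, take (Suc (tt \<gamma>)) \<gamma>,
      map (\<lambda>p. refl0 (step (\<gamma> ! tt \<gamma>) p)) (drop (tt \<gamma>) \<gamma>))" for \<gamma>
  define G where "G b = sigma \<rho> \<phi> (fst (snd (snd b))) * sigma \<rho> \<phi> (snd (snd (snd b)))"
    for b :: "nat \<times> nat \<times> pt list \<times> pt list"
  have "hsum n s \<le> (\<Sum>b\<in>T. G b)"
    unfolding hsum_def
  proof (rule sum_inj_le)
    show "finite T" unfolding T_def using finite_brk finite_hss by (auto intro!: finite_SigmaI)
    show "inj_on hm (hss n s)"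
    proof (rule inj_onI)
      fix x y assume x: "x \<in> hss n s" and y: "y \<in> hss n s" and h: "hm x = hm y"
      have lx: "length x = Suc n" and ly: "length y = Suc n" using x y by (auto simp: hss_def hs_def walks_iff)
      have tx: "tt x \<le> n" by (simp add: tt_def lastmax)
      have t: "tt x = tt y" and tk: "take (Suc (tt x)) x = take (Suc (tt y)) y" using h by (auto simp: hm_def)
      then have xt: "x ! tt x = y ! tt y" by (metis lessI nth_take)
      have "map (\<lambda>p. refl0 (step (y ! tt y) p)) (drop (tt y) x) = map (\<lambda>p. refl0 (step (y ! tt y) p)) (drop (tt y) y)"
        using h xt t unfolding hm_def by simp
      then have "drop (tt x) x = drop (tt x) y" using t inj_refl_step[of "y ! tt y"]
        by (simp add: inj_map_eq_map)
      moreover have "take (tt x) x = take (tt x) y" using tk t by (metis take_Suc_conv_app_nth lx tx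
            le_imp_less_Suc butlast_snoc ly)
      ultimately show "x = y" by (metis append_take_drop_id)
    qed
    show "hm ` hss n s \<subseteq> T"
    proof (rule image_subsetI)
      fix \<gamma> assume g: "\<gamma> \<in> hss n s"
      have w: "\<gamma> \<in> walks \<Omega> n" and pos: "\<And>i. 1 \<le> i \<Longrightarrow> i \<le> n \<Longrightarrow> 0 < xc (\<gamma> ! i)"
        and ub: "\<And>i. i \<le> n \<Longrightarrow> xc (\<gamma> ! i) \<le> int s" using g by (auto simp: hss_def hs_def)
      have g0: "xc (\<gamma> ! 0) = 0" using walks_0[OF w] by simp
      define t where "t = tt \<gamma>"
      define M where "M = xc (\<gamma> ! t)"
      have tn: "t \<le> n" and mx: "\<And>k. k \<le> n \<Longrightarrow> xc (\<gamma> ! k) \<le> M"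
        and lt: "\<And>k. t < k \<Longrightarrow> k \<le> n \<Longrightarrow> xc (\<gamma> ! k) < M"
        using lastmax[where f="\<lambda>i. xc (\<gamma> ! i)" and n=n] by (auto simp: t_def tt_def M_def)
      have M1: "M \<ge> 1" using mx[of 1] pos[of 1] n by simp
      have t1: "t \<ge> 1" using M1 g0 by (cases t) (auto simp: M_def)
      have Ms: "M \<le> int s" using ub tn by (simp add: M_def)
      define k where "k = nat M"
      have kM: "int k = M" using M1 by (simp add: k_def)
      have hmg: "hm \<gamma> = (k, t, take (Suc t) \<gamma>, map (\<lambda>p. refl0 (step (\<gamma> ! t) p)) (drop t \<gamma>))"
        by (simp add: hm_def t_def M_def k_def)
      have A1: "k \<in> {1..s}" "t \<in> {1..n}" using kM M1 Ms tn t1 by auto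
        have wb: "take (Suc t) \<gamma> \<in> walks \<Omega> t" using walk_take[OF w tn] .
        have "bridge \<Omega> t (take (Suc t) \<gamma>)"
          unfolding bridge_iff using wb t1 pos mx tn by (auto simp: M_def)
        then have A2: "take (Suc t) \<gamma> \<in> brk t k" using kM by (simp add: brk_def brs_def M_def)
        have R: "map (\<lambda>p. refl0 (step (\<gamma> ! t) p)) (drop t \<gamma>) \<in> walks \<Omega> (n - t)"
          "\<And>i. i \<le> n - t \<Longrightarrow> xc (map (\<lambda>p. refl0 (step (\<gamma> ! t) p)) (drop t \<gamma>) ! i) = M - xc (\<gamma> ! (t + i))"
          using walk_reflect[OF w tn] by (auto simp: M_def)
        have k1: "1 \<le> k" using kM M1 by simp
        have bnd: "xc (map (\<lambda>p. refl0 (step (\<gamma> ! t) p)) (drop t \<gamma>) ! i) \<le> int (k - 1)" if i: "i \<le> n - t" for i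
        proof -
          have "0 < xc (\<gamma> ! (t + i))" using pos[of "t + i"] t1 i tn by simp
          then show ?thesis using R(2)[OF i] kM k1 by (simp add: of_nat_diff)
        qed
        have A3: "map (\<lambda>p. refl0 (step (\<gamma> ! t) p)) (drop t \<gamma>) \<in> hss (n - t) (k - 1)"
          unfolding hss_def hs_def using R lt pos t1 kM bnd by auto
      show "hm \<gamma> \<in> T" unfolding hmg T_def using A1 A2 A3 by simp
    qed
    show "sigma \<rho> \<phi> \<gamma> \<le> G (hm \<gamma>)" if g: "\<gamma> \<in> hss n s" for \<gamma>
    proof -
      have w: "\<gamma> \<in> walks \<Omega> n" using g by (auto simp: hss_def hs_def)
      define t where "t = tt \<gamma>"
      have tn: "t \<le> n" and lt: "\<And>k. t < k \<Longrightarrow> k \<le> n \<Longrightarrow> xc (\<gamma> ! k) < xc (\<gamma> ! t)"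
        using lastmax[where f="\<lambda>i. xc (\<gamma> ! i)" and n=n] by (auto simp: t_def tt_def)
      have "sigma \<rho> \<phi> \<gamma> \<le> sigma \<rho> \<phi> (take (Suc t) \<gamma>) * sigma \<rho> \<phi> (drop t \<gamma>)"
        using sigma_split_le[OF w tn] lt by (metis less_irrefl)
      then show ?thesis using walk_reflect(3)[OF w tn] by (simp add: G_def hm_def t_def)
    qed
    show "\<And>y. y \<in> T \<Longrightarrow> 0 \<le> G y"
      by (auto simp: T_def G_def brk_def brs_def bridge_def hss_def hs_def intro!: mult_nonneg_nonneg sigma_walk_nonneg)
  qed
  also have "\<dots> = (\<Sum>k\<in>{1..s}. \<Sum>j\<in>{1..n}. bk j k * hsum (n - j) (k - 1))"
  proof -
    have "(\<Sum>b\<in>T. G b) = (\<Sum>k\<in>{1..s}. \<Sum>p\<in>(SIGMA j:{1..n}. brk j k \<times> hss (n - j) (k - 1)). G (k, p))"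
      unfolding T_def using sum.Sigma[of "{1..s}" "\<lambda>k. SIGMA j:{1..n}. brk j k \<times> hss (n - j) (k - 1)" "\<lambda>k p. G (k, p)"]
        finite_brk finite_hss by (simp add: case_prod_beta finite_SigmaI)
    also have "\<dots> = (\<Sum>k\<in>{1..s}. \<Sum>j\<in>{1..n}. \<Sum>q\<in>brk j k \<times> hss (n - j) (k - 1). G (k, j, q))"
    proof (rule sum.cong[OF refl])
      fix k show "(\<Sum>p\<in>(SIGMA j:{1..n}. brk j k \<times> hss (n - j) (k - 1)). G (k, p)) = (\<Sum>j\<in>{1..n}. \<Sum>q\<in>brk j k \<times> hss (n - j) (k - 1). G (k, j, q))"
        using sum.Sigma[of "{1..n}" "\<lambda>j. brk j k \<times> hss (n - j) (k - 1)" "\<lambda>j q. G (k, j, q)"]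
          finite_brk finite_hss by (simp add: case_prod_beta)
    qed
    also have "\<dots> = (\<Sum>k\<in>{1..s}. \<Sum>j\<in>{1..n}. bk j k * hsum (n - j) (k - 1))"
      unfolding G_def bk_def hsum_def by (simp add: sum_product sum.cartesian_product case_prod_beta)
    finally show ?thesis .
  qed
  finally show ?thesis .
qed

end


lemma prod_telescope:
  fixes b :: "nat \<Rightarrow> real"
  shows "1 + (\<Sum>k\<in>{1..s}. b k * (\<Prod>i\<in>{1..k-1}. 1 + b i)) = (\<Prod>i\<in>{1..s}. 1 + b i)"
proof (induction s)
  case (Suc s)
  have "(\<Sum>k\<in>{1..Suc s}. b k * (\<Prod>i\<in>{1..k-1}. 1 + b i)) = (\<Sum>k\<in>{1..s}. b k * (\<Prod>i\<in>{1..k-1}. 1 + b i)) + b (Suc s) * (\<Prod>i\<in>{1..s}. 1 + b i)"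
    by simp
  then show ?case using Suc by (simp add: algebra_simps)
qed simp

context poly
begin

definition HsG :: "real \<Rightarrow> nat \<Rightarrow> nat \<Rightarrow> real" where "HsG z N s = (\<Sum>n\<le>N. hsum n s * z ^ n)"
definition BkG :: "real \<Rightarrow> nat \<Rightarrow> nat \<Rightarrow> real" where "BkG z N k = (\<Sum>j\<le>N. bk j k * z ^ j)"
definition BG :: "real \<Rightarrow> nat \<Rightarrow> real" where "BG z N = (\<Sum>j\<le>N. bsum j * z ^ j)"
definition HA :: "real \<Rightarrow> nat \<Rightarrow> real" where "HA z N = (\<Sum>n\<le>N. hsA n * z ^ n)"

lemma HsG_rec:
  assumes z: "z \<ge> 0"
  shows "HsG z N s \<le> 1 + (\<Sum>k\<in>{1..s}. BkG z N k * HsG z N (k - 1))"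
proof -
  define F where "F k n j = (bk j k * z ^ j) * (hsum (n - j) (k - 1) * z ^ (n - j))" for k n j
  have Fnn: "F k n j \<ge> 0" for k n j using bk_nonneg hsum_nonneg z by (simp add: F_def)
  have "HsG z N s = hsum 0 s + (\<Sum>n\<in>{1..N}. hsum n s * z ^ n)"
    unfolding HsG_def atMost_atLeast0 by (simp add: sum.atLeast_Suc_atMost)
  also have "\<dots> \<le> 1 + (\<Sum>n\<in>{1..N}. \<Sum>k\<in>{1..s}. \<Sum>j\<in>{1..n}. F k n j)"
  proof (rule add_mono[OF hsum0 sum_mono])
    fix n assume n: "n \<in> {1..N}"
    have "hsum n s * z ^ n \<le> (\<Sum>k\<in>{1..s}. \<Sum>j\<in>{1..n}. bk j k * hsum (n - j) (k - 1)) * z ^ n"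
      using hw_core[of n s] n z by (intro mult_right_mono) auto
    also have "\<dots> = (\<Sum>k\<in>{1..s}. \<Sum>j\<in>{1..n}. F k n j)"
      by (auto simp: F_def sum_distrib_right intro!: sum.cong simp flip: power_add)
    finally show "hsum n s * z ^ n \<le> (\<Sum>k\<in>{1..s}. \<Sum>j\<in>{1..n}. F k n j)" .
  qed
  also have "(\<Sum>n\<in>{1..N}. \<Sum>k\<in>{1..s}. \<Sum>j\<in>{1..n}. F k n j) = (\<Sum>k\<in>{1..s}. \<Sum>n\<in>{1..N}. \<Sum>j\<in>{1..n}. F k n j)"
    by (rule sum.swap)
  also have "\<dots> \<le> (\<Sum>k\<in>{1..s}. \<Sum>n\<le>N. \<Sum>j\<le>n. F k n j)"
  proof (rule sum_mono)
    fix k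
    have "(\<Sum>n\<in>{1..N}. \<Sum>j\<in>{1..n}. F k n j) \<le> (\<Sum>n\<in>{1..N}. \<Sum>j\<le>n. F k n j)"
      by (intro sum_mono sum_mono2) (auto simp: Fnn)
    also have "\<dots> \<le> (\<Sum>n\<le>N. \<Sum>j\<le>n. F k n j)"
      by (intro sum_mono2) (auto intro!: sum_nonneg simp: Fnn)
    finally show "(\<Sum>n\<in>{1..N}. \<Sum>j\<in>{1..n}. F k n j) \<le> (\<Sum>n\<le>N. \<Sum>j\<le>n. F k n j)" .
  qed
  also have "\<dots> \<le> (\<Sum>k\<in>{1..s}. BkG z N k * HsG z N (k - 1))"
  proof (rule sum_mono)
    fix k
    show "(\<Sum>n\<le>N. \<Sum>j\<le>n. F k n j) \<le> BkG z N k * HsG z N (k - 1)"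
      unfolding F_def BkG_def HsG_def
      by (rule conv_le[of "\<lambda>j. bk j k * z ^ j" "\<lambda>l. hsum l (k - 1) * z ^ l" N])
         (use bk_nonneg hsum_nonneg z in auto)
  qed
  finally show ?thesis by simp
qed

lemma BkG_nonneg: "z \<ge> 0 \<Longrightarrow> BkG z N k \<ge> 0" unfolding BkG_def using bk_nonneg by (auto intro!: sum_nonneg)

lemma HsG_prod:
  assumes z: "z \<ge> 0"
  shows "HsG z N s \<le> (\<Prod>k\<in>{1..s}. 1 + BkG z N k)"
proof (induction s rule: less_induct)
  case (less s)
  have "HsG z N s \<le> 1 + (\<Sum>k\<in>{1..s}. BkG z N k * HsG z N (k - 1))" by (rule HsG_rec[OF z])
  also have "\<dots> \<le> 1 + (\<Sum>k\<in>{1..s}. BkG z N k * (\<Prod>i\<in>{1..k-1}. 1 + BkG z N i))"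
    using less BkG_nonneg[OF z] by (auto intro!: sum_mono mult_left_mono)
  also have "\<dots> = (\<Prod>i\<in>{1..s}. 1 + BkG z N i)" by (rule prod_telescope)
  finally show ?case .
qed

lemma brk_sum_le: "(\<Sum>k\<in>{1..s}. bk j k) \<le> bsum j"
proof -
  have "(\<Sum>k\<in>{1..s}. bk j k) = sum (sigma \<rho> \<phi>) (\<Union>k\<in>{1..s}. brk j k)"
    unfolding bk_def by (rule sum.UNION_disjoint[symmetric]) (simp_all add: finite_brk, auto simp: brk_def)
  also have "\<dots> \<le> bsum j" unfolding bsum_def
    by (rule sum_mono2) (simp add: finite_brs, auto simp: brk_def brs_def bridge_def intro!: sigma_walk_nonneg)
  finally show ?thesis .
qed

lemma HsG_exp:
  assumes z: "z \<ge> 0"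
  shows "HsG z N s \<le> exp (BG z N)"
proof -
  have "HsG z N s \<le> (\<Prod>k\<in>{1..s}. 1 + BkG z N k)" by (rule HsG_prod[OF z])
  also have "\<dots> \<le> (\<Prod>k\<in>{1..s}. exp (BkG z N k))"
    by (intro prod_mono) (use BkG_nonneg[OF z] in \<open>auto simp: add.commute intro: exp_ge_add_one_self\<close>)
  also have "\<dots> = exp (\<Sum>k\<in>{1..s}. BkG z N k)" by (simp add: exp_sum)
  also have "(\<Sum>k\<in>{1..s}. BkG z N k) = (\<Sum>j\<le>N. (\<Sum>k\<in>{1..s}. bk j k) * z ^ j)"
    unfolding BkG_def by (subst sum.swap) (simp add: sum_distrib_right)
  also have "\<dots> \<le> BG z N" unfolding BG_def
    using brk_sum_le z by (intro sum_mono mult_right_mono) auto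
  finally show ?thesis by simp
qed

definition Rmax :: int where "Rmax = Max (xc ` \<Omega>)"

lemma xc_bound: "\<gamma> \<in> walks \<Omega> n \<Longrightarrow> i \<le> n \<Longrightarrow> xc (\<gamma> ! i) \<le> int i * Rmax"
proof (induction i)
  case 0 then show ?case using walks_0 by simp
next
  case (Suc i)
  have l: "length \<gamma> = Suc n" "pth \<Omega> \<gamma>" using Suc by (auto simp: walks_iff)
  have "step (\<gamma> ! i) (\<gamma> ! Suc i) \<in> \<Omega>" using l Suc(3) unfolding pth_nth by (metis diff_Suc_1 le_imp_less_Suc zero_less_Suc)
  then have "xc (step (\<gamma> ! i) (\<gamma> ! Suc i)) \<le> Rmax" unfolding Rmax_def using finO by (auto intro: Max_ge)
  then show ?case using Suc by (simp add: xc_step algebra_simps)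
qed

lemma HA_exp:
  assumes z: "z \<ge> 0"
  shows "HA z N \<le> exp (BG z N)"
proof -
  obtain e where e: "e \<in> \<Omega>" "xc e > 0" using exists_e by blast
  have R0: "Rmax \<ge> 0" unfolding Rmax_def using e finO by (meson Max_ge finite_imageI image_eqI less_le_trans order_less_imp_le)
  define S where "S = nat (int N * Rmax)"
  have "hs n = hss n S" if "n \<le> N" for n
  proof -
    have "xc (\<gamma> ! i) \<le> int S" if "\<gamma> \<in> hs n" "i \<le> n" for \<gamma> i
    proof -
      have "xc (\<gamma> ! i) \<le> int i * Rmax" using xc_bound that by (auto simp: hs_def)
      also have "\<dots> \<le> int N * Rmax" using that \<open>n \<le> N\<close> R0 by (intro mult_right_mono) auto
      finally show ?thesis by (simp add: S_def)
    qed
    then show ?thesis by (auto simp: hss_def)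
  qed
  then have "HA z N = HsG z N S" unfolding HA_def HsG_def hsA_def hsum_def by (intro sum.cong) auto
  then show ?thesis using HsG_exp[OF z] by simp
qed

end


lemma pth_Cons: "xs \<noteq> [] \<Longrightarrow> pth \<Omega> (a # xs) \<longleftrightarrow> step a (hd xs) \<in> \<Omega> \<and> pth \<Omega> xs"
  by (cases xs) auto
lemma ew_Cons: "xs \<noteq> [] \<Longrightarrow> ew \<rho> (a # xs) = \<rho> (step a (hd xs)) * ew \<rho> xs"
  by (cases xs) auto
lemma step_origin_inj: "step c origin = step c' origin \<Longrightarrow> c = c'"
  by (auto simp: step_def origin_def fun_eq_iff)

context poly
begin

lemma walk_split:
  assumes e: "e \<in> \<Omega>" "xc e > 0" "\<rho> e > 0"
  shows "Z n \<le> (1 / \<rho> e) * (\<Sum>m\<le>n. hsA (Suc m) * hsA (n - m))"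
proof -
  define T where "T = (SIGMA m:{..n}. hs (Suc m) \<times> hs (n - m))"
  define mm where "mm \<gamma> = lastmax (\<lambda>i. - xc (\<gamma> ! i)) n" for \<gamma>
  define AA where "AA \<gamma> = map (step (\<gamma> ! mm \<gamma>)) (rev (take (Suc (mm \<gamma>)) \<gamma>))" for \<gamma>
  define hm where "hm \<gamma> = (mm \<gamma>, origin # map (addp e) (AA \<gamma>), map (step (\<gamma> ! mm \<gamma>)) (drop (mm \<gamma>) \<gamma>))" for \<gamma>
  define G where "G b = (1 / \<rho> e) * (sigma \<rho> \<phi> (fst (snd b)) * sigma \<rho> \<phi> (snd (snd b)))"
    for b :: "nat \<times> pt list \<times> pt list"
  have mmp: "mm \<gamma> \<le> n" "\<And>k. k \<le> n \<Longrightarrow> xc (\<gamma> ! mm \<gamma>) \<le> xc (\<gamma> ! k)"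
    "\<And>k. mm \<gamma> < k \<Longrightarrow> k \<le> n \<Longrightarrow> xc (\<gamma> ! mm \<gamma>) < xc (\<gamma> ! k)" for \<gamma>
    using lastmax[where f="\<lambda>i. - xc (\<gamma> ! i)" and n=n] by (auto simp: mm_def)
  have AAw: "AA \<gamma> \<in> walks \<Omega> (mm \<gamma>)" and AAx: "\<And>i. i \<le> mm \<gamma> \<Longrightarrow> xc (AA \<gamma> ! i) = xc (\<gamma> ! (mm \<gamma> - i)) - xc (\<gamma> ! mm \<gamma>)"
    and AAs: "sigma \<rho> \<phi> (AA \<gamma>) = sigma \<rho> \<phi> (take (Suc (mm \<gamma>)) \<gamma>)"
    if g: "\<gamma> \<in> walks \<Omega> n" for \<gamma>
  proof -
    have l: "length \<gamma> = Suc n" "pth \<Omega> \<gamma>" using g by (auto simp: walks_iff)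
    have pt: "pth \<Omega> (take (Suc (mm \<gamma>)) \<gamma>)" using pth_take l by auto
    have ne: "rev (take (Suc (mm \<gamma>)) \<gamma>) \<noteq> []" using l by auto
    have "hd (rev (take (Suc (mm \<gamma>)) \<gamma>)) = \<gamma> ! mm \<gamma>" using l mmp(1)[of \<gamma>]
      by (simp add: hd_rev last_take_nth_conv)
    then have "hd (AA \<gamma>) = origin" unfolding AA_def hd_map[OF ne] by (simp add: step_self)
    moreover have "pth \<Omega> (AA \<gamma>)" unfolding AA_def using pth_tr pth_rev' pt by simp
    ultimately show "AA \<gamma> \<in> walks \<Omega> (mm \<gamma>)" using l mmp(1)[of \<gamma>] by (simp add: walks_iff AA_def)
    show "\<And>i. i \<le> mm \<gamma> \<Longrightarrow> xc (AA \<gamma> ! i) = xc (\<gamma> ! (mm \<gamma> - i)) - xc (\<gamma> ! mm \<gamma>)"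
      using l mmp(1)[of \<gamma>] by (simp add: AA_def rev_nth xc_step min_def)
    show "sigma \<rho> \<phi> (AA \<gamma>) = sigma \<rho> \<phi> (take (Suc (mm \<gamma>)) \<gamma>)"
      unfolding AA_def using sigma_tr sigma_rev pt by simp
  qed
  have A'props: "origin # map (addp e) (AA \<gamma>) \<in> hs (Suc (mm \<gamma>))"
    "sigma \<rho> \<phi> (origin # map (addp e) (AA \<gamma>)) = \<rho> e * sigma \<rho> \<phi> (AA \<gamma>)"
    if g: "\<gamma> \<in> walks \<Omega> n" for \<gamma>
  proof -
    have w: "AA \<gamma> \<in> walks \<Omega> (mm \<gamma>)" using AAw[OF g] .
    then have l: "length (AA \<gamma>) = Suc (mm \<gamma>)" "hd (AA \<gamma>) = origin" "pth \<Omega> (AA \<gamma>)" by (auto simp: walks_iff)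
    have ne: "map (addp e) (AA \<gamma>) \<noteq> []" using l by auto
    have hd: "hd (map (addp e) (AA \<gamma>)) = e" using l by (cases "AA \<gamma>") auto
    have pm: "pth \<Omega> (map (addp e) (AA \<gamma>))" using pth_map[of "addp e" id] l by (simp add: step_addp2)
    have se: "step origin e = e" by (simp add: step_def origin_def)
    have xpos: "xc (AA \<gamma> ! i) \<ge> 0" if "i < length (AA \<gamma>)" for i
      using AAx[OF g, of i] mmp(2)[of "mm \<gamma> - i" \<gamma>] mmp(1)[of \<gamma>] that l by simp
    have xs: "0 < xc ((origin # map (addp e) (AA \<gamma>)) ! i)" if "i \<in> {1..Suc (mm \<gamma>)}" for i
      using that xpos[of "i - 1"] e(2) l by (cases i) (auto simp: xc_addp)
    show "origin # map (addp e) (AA \<gamma>) \<in> hs (Suc (mm \<gamma>))"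
      unfolding hs_def using l pth_Cons[OF ne] hd pm se e xs by (simp add: walks_iff)
    have "origin \<notin> set (map (addp e) (AA \<gamma>))"
    proof
      assume "origin \<in> set (map (addp e) (AA \<gamma>))"
      then obtain i where "i < length (AA \<gamma>)" "addp e (AA \<gamma> ! i) = origin"
        by (auto simp: in_set_conv_nth)
      then show False using xpos e(2) by (metis add_pos_nonneg less_irrefl xc_addp xc_origin)
    qed
    then have "vt \<phi> (origin # map (addp e) (AA \<gamma>)) = vt \<phi> (AA \<gamma>)"
      using vt_Cons_notin[OF phi1 phi0] vt_map_inj[OF inj_addp] by simp
    moreover have "ew \<rho> (origin # map (addp e) (AA \<gamma>)) = \<rho> e * ew \<rho> (AA \<gamma>)"
      using ew_Cons[OF ne] hd se ew_map[of "addp e" id] by (simp add: step_addp2)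
    ultimately show "sigma \<rho> \<phi> (origin # map (addp e) (AA \<gamma>)) = \<rho> e * sigma \<rho> \<phi> (AA \<gamma>)"
      by (simp add: sigma_eq)
  qed
  have "Z n \<le> (\<Sum>b\<in>T. G b)"
    unfolding Z_def Zn_def
  proof (rule sum_inj_le)
    show "finite T" unfolding T_def using finite_hs by (auto intro!: finite_SigmaI)
    show "inj_on hm (walks \<Omega> n)"
    proof (rule inj_onI)
      fix x y assume x: "x \<in> walks \<Omega> n" and y: "y \<in> walks \<Omega> n" and h: "hm x = hm y"
      have lx: "length x = Suc n" and ly: "length y = Suc n" using x y by (auto simp: walks_iff)
      have m: "mm x = mm y" using h by (simp add: hm_def)
      have "map (addp e) (AA x) = map (addp e) (AA y)" using h by (simp add: hm_def)
      then have A: "AA x = AA y" using inj_addp[of e] by (simp add: inj_map_eq_map)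
      have "AA x ! mm x = step (x ! mm x) (x ! 0)" "AA y ! mm y = step (y ! mm y) (y ! 0)"
        using lx ly mmp(1) by (auto simp: AA_def rev_nth)
      then have "step (x ! mm x) origin = step (y ! mm x) origin" using A m walks_0[OF x] walks_0[OF y] by simp
      then have c: "x ! mm x = y ! mm x" by (rule step_origin_inj)
      have "rev (take (Suc (mm x)) x) = rev (take (Suc (mm x)) y)"
        using A m c inj_step[of "y ! mm x"] unfolding AA_def by (simp add: inj_map_eq_map)
      then have tk: "take (Suc (mm x)) x = take (Suc (mm x)) y" by simp
      have "map (step (y ! mm x)) (drop (mm x) x) = map (step (y ! mm x)) (drop (mm x) y)"
        using h m c unfolding hm_def by simp
      then have "drop (mm x) x = drop (mm x) y" using inj_step[of "y ! mm x"] by (simp add: inj_map_eq_map)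
      moreover have "take (mm x) x = take (mm x) y" using tk by (metis butlast_take diff_Suc_1 lx ly mmp(1) le_imp_less_Suc less_eq_Suc_le)
      ultimately show "x = y" by (metis append_take_drop_id)
    qed
    show "hm ` walks \<Omega> n \<subseteq> T"
    proof (rule image_subsetI)
      fix \<gamma> assume g: "\<gamma> \<in> walks \<Omega> n"
      have B: "map (step (\<gamma> ! mm \<gamma>)) (drop (mm \<gamma>) \<gamma>) \<in> hs (n - mm \<gamma>)"
      proof -
        have w: "map (step (\<gamma> ! mm \<gamma>)) (drop (mm \<gamma>) \<gamma>) \<in> walks \<Omega> (n - mm \<gamma>)" using walk_drop[OF g mmp(1)] .
        have l: "length \<gamma> = Suc n" using g by (simp add: walks_iff)
        show ?thesis unfolding hs_def using w mmp(1,3)[of \<gamma>] l by (auto simp: xc_step)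
      qed
      show "hm \<gamma> \<in> T" unfolding T_def hm_def using A'props(1)[OF g] B mmp(1)[of \<gamma>] by simp
    qed
    show "sigma \<rho> \<phi> \<gamma> \<le> G (hm \<gamma>)" if g: "\<gamma> \<in> walks \<Omega> n" for \<gamma>
    proof -
      have "sigma \<rho> \<phi> \<gamma> \<le> sigma \<rho> \<phi> (take (Suc (mm \<gamma>)) \<gamma>) * sigma \<rho> \<phi> (drop (mm \<gamma>) \<gamma>)"
        using sigma_split_le[OF g mmp(1)] mmp(3)[of \<gamma>] by (metis less_irrefl)
      also have "\<dots> = (1 / \<rho> e) * (sigma \<rho> \<phi> (origin # map (addp e) (AA \<gamma>)) * sigma \<rho> \<phi> (map (step (\<gamma> ! mm \<gamma>)) (drop (mm \<gamma>) \<gamma>)))"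
        using A'props(2)[OF g] AAs[OF g] sigma_tr e(3) by simp
      finally show ?thesis by (simp add: G_def hm_def)
    qed
    show "\<And>y. y \<in> T \<Longrightarrow> 0 \<le> G y"
      using e(3) by (auto simp: T_def G_def hs_def intro!: divide_nonneg_pos mult_nonneg_nonneg sigma_walk_nonneg)
  qed
  also have "\<dots> = (1 / \<rho> e) * (\<Sum>m\<le>n. hsA (Suc m) * hsA (n - m))"
  proof -
    have "(\<Sum>b\<in>T. G b) = (\<Sum>m\<le>n. \<Sum>p\<in>hs (Suc m) \<times> hs (n - m). G (m, p))"
      unfolding T_def using sum.Sigma[of "{..n}" "\<lambda>m. hs (Suc m) \<times> hs (n - m)" "\<lambda>m p. G (m, p)"] finite_hs
      by (simp add: case_prod_beta)
    also have "\<dots> = (\<Sum>m\<le>n. (1 / \<rho> e) * (\<Sum>p\<in>hs (Suc m) \<times> hs (n - m). sigma \<rho> \<phi> (fst p) * sigma \<rho> \<phi> (snd p)))"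
      unfolding G_def by (simp only: fst_conv snd_conv sum_distrib_left)
    also have "\<dots> = (\<Sum>m\<le>n. (1 / \<rho> e) * (hsA (Suc m) * hsA (n - m)))"
    proof -
      have "(\<Sum>p\<in>hs (Suc m) \<times> hs (n - m). sigma \<rho> \<phi> (fst p) * sigma \<rho> \<phi> (snd p)) = hsA (Suc m) * hsA (n - m)" for m
        by (simp add: hsA_def sum_product sum.cartesian_product case_prod_beta)
      then show ?thesis by simp
    qed
    finally show ?thesis by (simp add: sum_distrib_left)
  qed
  finally show ?thesis .
qed

lemma BG_mono: "z \<ge> 0 \<Longrightarrow> N \<le> M \<Longrightarrow> BG z N \<le> BG z M"
  unfolding BG_def using bsum_nonneg by (intro sum_mono2) auto

lemma Z_gen_bound:
  assumes e: "e \<in> \<Omega>" "xc e > 0" "\<rho> e > 0" and z: "z > 0"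
  shows "(\<Sum>n\<le>N. Z n * z ^ n) \<le> (1 / (\<rho> e * z)) * exp (2 * BG z (Suc N))"
proof -
  define f where "f m = hsA (Suc m) * z ^ Suc m" for m
  define g where "g l = hsA l * z ^ l" for l
  have fg: "f m \<ge> 0" "g m \<ge> 0" for m using hsA_nonneg z by (auto simp: f_def g_def)
  have "(\<Sum>n\<le>N. Z n * z ^ n) \<le> (\<Sum>n\<le>N. ((1 / \<rho> e) * (\<Sum>m\<le>n. hsA (Suc m) * hsA (n - m))) * z ^ n)"
    using walk_split[OF e] z by (intro sum_mono mult_right_mono) auto
  also have "\<dots> = (1 / (\<rho> e * z)) * (\<Sum>n\<le>N. \<Sum>m\<le>n. f m * g (n - m))"
  proof -
    have "((1 / \<rho> e) * (\<Sum>m\<le>n. hsA (Suc m) * hsA (n - m))) * z ^ n = (1 / (\<rho> e * z)) * (\<Sum>m\<le>n. f m * g (n - m))" for n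
    proof -
      have "f m * g (n - m) = z * (hsA (Suc m) * hsA (n - m) * z ^ n)" if "m \<le> n" for m
        using that by (simp add: f_def g_def algebra_simps flip: power_add)
      then have "(\<Sum>m\<le>n. f m * g (n - m)) = z * ((\<Sum>m\<le>n. hsA (Suc m) * hsA (n - m)) * z ^ n)"
        by (simp add: sum_distrib_left sum_distrib_right)
      then show ?thesis using z e(3) by simp
    qed
    then show ?thesis by (simp add: sum_distrib_left)
  qed
  also have "\<dots> \<le> (1 / (\<rho> e * z)) * ((\<Sum>m\<le>N. f m) * (\<Sum>l\<le>N. g l))"
    using conv_le[of f g N] fg z e(3) by (intro mult_left_mono) auto
  also have "\<dots> \<le> (1 / (\<rho> e * z)) * (HA z (Suc N) * HA z N)"
  proof -
    have "HA z (Suc N) = hsA 0 * z ^ 0 + (\<Sum>m\<le>N. f m)" unfolding HA_def f_def by (rule sum.atMost_Suc_shift)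
    then have "(\<Sum>m\<le>N. f m) \<le> HA z (Suc N)" using hsA_nonneg[of 0] by simp
    moreover have "(\<Sum>l\<le>N. g l) = HA z N" by (simp add: g_def HA_def)
    moreover have "(\<Sum>l\<le>N. g l) \<ge> 0" using fg by (auto intro!: sum_nonneg)
    ultimately have "(\<Sum>m\<le>N. f m) * (\<Sum>l\<le>N. g l) \<le> HA z (Suc N) * HA z N"
      using mult_right_mono by metis
    then show ?thesis using z e(3) by (intro mult_left_mono) auto
  qed
  also have "\<dots> \<le> (1 / (\<rho> e * z)) * (exp (BG z (Suc N)) * exp (BG z (Suc N)))"
  proof -
    have "HA z N \<le> exp (BG z N)" using HA_exp z by simp
    also have "\<dots> \<le> exp (BG z (Suc N))" using BG_mono[of z N "Suc N"] z by simp
    finally have h1: "HA z N \<le> exp (BG z (Suc N))" .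
    have h2: "HA z (Suc N) \<le> exp (BG z (Suc N))" using HA_exp z by simp
    have "HA z N \<ge> 0" unfolding HA_def using hsA_nonneg z by (auto intro!: sum_nonneg)
    then have "HA z (Suc N) * HA z N \<le> exp (BG z (Suc N)) * exp (BG z (Suc N))"
      using h1 h2 by (intro mult_mono) auto
    then show ?thesis using z e(3) by (intro mult_left_mono) auto
  qed
  also have "\<dots> = (1 / (\<rho> e * z)) * exp (2 * BG z (Suc N))" by (simp only: mult_2 exp_add)
  finally show ?thesis .
qed

end


context poly
begin

definition zc :: real where "zc = exp (- lam)"
definition IG :: "real \<Rightarrow> nat \<Rightarrow> real" where "IG z N = (\<Sum>n\<le>N. isum n * z ^ n)"

lemma zc_pos: "zc > 0" by (simp add: zc_def)

lemma BG_unbounded: "\<exists>N. BG zc N > C"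
proof (rule ccontr)
  assume "\<not> (\<exists>N. BG zc N > C)"
  then have bnd: "BG zc N \<le> C" for N by (simp add: not_less)
  obtain e where e: "e \<in> \<Omega>" "xc e > 0" "\<rho> e > 0" using exists_e by blast
  define K where "K = (1 / (\<rho> e * zc)) * exp (2 * C)"
  have up: "(\<Sum>n\<le>N. Z n * zc ^ n) \<le> K" for N
  proof -
    have "(\<Sum>n\<le>N. Z n * zc ^ n) \<le> (1 / (\<rho> e * zc)) * exp (2 * BG zc (Suc N))"
      by (rule Z_gen_bound[OF e zc_pos])
    also have "\<dots> \<le> K" unfolding K_def using bnd[of "Suc N"] e(3) zc_pos
      by (intro mult_left_mono) auto
    finally show ?thesis .
  qed
  have low: "Z n * zc ^ n \<ge> exp lam" for n
  proof -
    have "zc ^ n = exp (- lam * n)" by (simp add: zc_def exp_of_nat_mult[symmetric] mult.commute)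
    then have "Z n * zc ^ n \<ge> exp (lam * (n + 1)) * exp (- lam * n)"
      using lam_facts(2)[of n] by (simp add: mult_right_mono)
    also have "exp (lam * (n + 1)) * exp (- lam * n) = exp lam" by (simp add: exp_add[symmetric] algebra_simps)
    finally show ?thesis .
  qed
  obtain N :: nat where N: "N > K / exp lam" using reals_Archimedean2 by blast
  have "(\<Sum>n\<le>N. Z n * zc ^ n) \<ge> (\<Sum>n\<le>N. exp lam)" using low by (intro sum_mono) auto
  then have "real (Suc N) * exp lam \<le> K" using up[of N] by simp
  moreover have "K < real (Suc N) * exp lam"
  proof -
    have "K < real N * exp lam" using N by (simp add: field_simps)
    moreover have "real (Suc N) * exp lam = exp lam + real N * exp lam" by (simp add: algebra_simps)
    moreover have "exp lam > 0" by simp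
    ultimately show ?thesis by linarith
  qed
  ultimately show False by simp
qed

lemma isum0: "isum 0 = 0" by (simp add: isum_def irs_def bridge_def)
lemma bsum0: "bsum 0 = 0" by (simp add: bsum_def brs_def bridge_def)

lemma renewal_conv: "bsum n = isum n + (\<Sum>j\<le>n. isum j * bsum (n - j))"
proof -
  have "(\<Sum>j\<le>n. isum j * bsum (n - j)) = (\<Sum>j\<in>{1..<n}. isum j * bsum (n - j))"
  proof (rule sum.mono_neutral_right)
    show "\<forall>i\<in>{..n} - {1..<n}. isum i * bsum (n - i) = 0"
    proof
      fix i assume "i \<in> {..n} - {1..<n}"
      then have "i = 0 \<or> i = n" by auto
      then show "isum i * bsum (n - i) = 0" using isum0 bsum0 by auto
    qed
  qed auto
  then show ?thesis using renewal_eq[of n] by simp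
qed

lemma BG_split:
  assumes z: "z \<ge> 0"
  shows "BG z M = IG z M + (\<Sum>n\<le>M. \<Sum>j\<le>n. (isum j * z ^ j) * (bsum (n - j) * z ^ (n - j)))"
proof -
  have "(isum j * z ^ j) * (bsum (n - j) * z ^ (n - j)) = isum j * bsum (n - j) * z ^ n" if "j \<le> n" for j n
  proof -
    have p: "z ^ j * z ^ (n - j) = z ^ n" using that by (metis power_add le_add_diff_inverse)
    have "(isum j * z ^ j) * (bsum (n - j) * z ^ (n - j)) = isum j * bsum (n - j) * (z ^ j * z ^ (n - j))"
      by (simp add: algebra_simps)
    then show ?thesis using p by simp
  qed
  then have "(\<Sum>j\<le>n. (isum j * z ^ j) * (bsum (n - j) * z ^ (n - j))) = (\<Sum>j\<le>n. isum j * bsum (n - j)) * z ^ n" for n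
    unfolding sum_distrib_right by (intro sum.cong) auto
  then show ?thesis unfolding BG_def IG_def
    by (subst renewal_conv) (simp add: algebra_simps sum.distrib)
qed

lemma IG_nonneg: "z \<ge> 0 \<Longrightarrow> IG z N \<ge> 0" unfolding IG_def using isum_nonneg by (auto intro!: sum_nonneg)
lemma BG_nonneg: "z \<ge> 0 \<Longrightarrow> BG z N \<ge> 0" unfolding BG_def using bsum_nonneg by (auto intro!: sum_nonneg)
lemma IG_mono: "z \<ge> 0 \<Longrightarrow> N \<le> M \<Longrightarrow> IG z N \<le> IG z M"
  unfolding IG_def using isum_nonneg by (intro sum_mono2) auto

lemma bsum_le_Z: "bsum n \<le> Z n"
  unfolding bsum_def Z_def Zn_def using brs_walks finite_walks sigma_walk_nonneg by (intro sum_mono2) auto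

lemma IG_lt1:
  assumes z: "0 < z" "z < zc"
  shows "IG z N \<le> 1"
proof -
  have sZ: "summable (\<lambda>n. Z n * z ^ n)" using Z_summable z by (simp add: zc_def)
  have sB: "summable (\<lambda>n. bsum n * z ^ n)"
    by (rule summable_comparison_test[OF _ sZ]) (use bsum_le_Z bsum_nonneg z in \<open>auto intro!: exI[of _ 0] mult_right_mono\<close>)
  define B where "B = suminf (\<lambda>n. bsum n * z ^ n)"
  have BGt: "(\<lambda>M. BG z M) \<longlonglongrightarrow> B" unfolding BG_def B_def using summable_LIMSEQ'[OF sB] by simp
  have BGle: "BG z M \<le> B" for M unfolding BG_def B_def
    by (rule sum_le_suminf[OF sB]) (use bsum_nonneg z in auto)
  have key: "IG z N * (1 + BG z M) \<le> B" if "N \<le> M" for M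
  proof -
    have "IG z N * (1 + BG z M) \<le> IG z M * (1 + BG z M)"
      using IG_mono[of z N M] that z BG_nonneg[of z M] by (intro mult_right_mono) auto
    also have "\<dots> = IG z M + IG z M * BG z M" by (simp add: algebra_simps)
    also have "\<dots> \<le> IG z (2 * M) + IG z M * BG z M" using IG_mono[of z M "2 * M"] z by simp
    also have "IG z M * BG z M \<le> (\<Sum>n\<le>2*M. \<Sum>j\<le>n. (isum j * z ^ j) * (bsum (n - j) * z ^ (n - j)))"
      unfolding IG_def BG_def by (rule conv_ge) (use isum_nonneg bsum_nonneg z in auto)
    also have "IG z (2 * M) + (\<Sum>n\<le>2*M. \<Sum>j\<le>n. (isum j * z ^ j) * (bsum (n - j) * z ^ (n - j))) = BG z (2 * M)"
      using BG_split[of z "2 * M"] z by simp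
    also have "\<dots> \<le> B" by (rule BGle)
    finally show ?thesis by simp
  qed
  have "IG z N * (1 + B) \<le> B"
  proof (rule LIMSEQ_le_const2)
    show "(\<lambda>M. IG z N * (1 + BG z M)) \<longlonglongrightarrow> IG z N * (1 + B)" by (intro tendsto_intros BGt)
    show "\<exists>N'. \<forall>M\<ge>N'. IG z N * (1 + BG z M) \<le> B" using key by blast
  qed
  moreover have "B \<ge> 0" using BGle[of 0] BG_nonneg[of z 0] z by simp
  ultimately show ?thesis
    by (smt (verit, best) mult_le_cancel_left1 mult.commute)
qed

lemma IG_le1: "IG zc N \<le> 1"
proof (rule tendsto_upperbound)
  show "((\<lambda>z. IG z N) \<longlongrightarrow> IG zc N) (at_left zc)" unfolding IG_def by (intro tendsto_intros)
  have "eventually (\<lambda>z. z \<in> {0<..<zc}) (at_left zc)" using zc_pos by (rule eventually_at_left_real)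
  then show "eventually (\<lambda>z. IG z N \<le> 1) (at_left zc)"
    by eventually_elim (auto intro: IG_lt1)
  show "\<not> trivial_limit (at_left zc)" by simp
qed

lemma IG_approach: "a < 1 \<Longrightarrow> \<exists>N. IG zc N > a"
proof (rule ccontr)
  assume a: "a < 1" and "\<not> (\<exists>N. IG zc N > a)"
  then have le: "IG zc N \<le> a" for N by (simp add: not_less)
  have a0: "a \<ge> 0" using le[of 0] IG_nonneg[of zc 0] zc_pos by simp
  have "BG zc N \<le> a / (1 - a)" for N
  proof -
    have "BG zc N = IG zc N + (\<Sum>n\<le>N. \<Sum>j\<le>n. (isum j * zc ^ j) * (bsum (n - j) * zc ^ (n - j)))"
      using BG_split zc_pos by simp
    also have "\<dots> \<le> IG zc N + IG zc N * BG zc N"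
      unfolding IG_def BG_def using zc_pos isum_nonneg bsum_nonneg
      by (intro add_left_mono conv_le) auto
    also have "\<dots> \<le> a + a * BG zc N"
      using le[of N] BG_nonneg[of zc N] zc_pos by (intro add_mono mult_right_mono) auto
    finally have "BG zc N * (1 - a) \<le> a" by (simp add: algebra_simps)
    then show ?thesis using a by (simp add: field_simps)
  qed
  then show False using BG_unbounded[of "a / (1 - a)"] by (meson not_less)
qed

end


context poly
begin

definition Ub :: "nat \<Rightarrow> pt list set" where "Ub N = (\<Union>n\<le>N. irs n)"

lemma irb_eq: "irreducible_bridges \<Omega> = (\<Union>n. irs n)"
  by (auto simp: irreducible_bridges_def irs_def bridge_def)

lemma irs_wlen: "\<gamma> \<in> irs n \<Longrightarrow> wlen \<gamma> = n"
  by (auto simp: irs_def bridge_def walks_wlen)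

lemma main_has_sum:
  "((\<lambda>\<gamma>. exp (- lambda0 \<Omega> \<rho> \<phi> * real (wlen \<gamma>)) * sigma \<rho> \<phi> \<gamma>) has_sum 1) (irreducible_bridges \<Omega>)"
proof -
  define f where "f \<gamma> = exp (- lambda0 \<Omega> \<rho> \<phi> * real (wlen \<gamma>)) * sigma \<rho> \<phi> \<gamma>" for \<gamma>
  define A where "A = irreducible_bridges \<Omega>"
  have fA: "f \<gamma> = zc ^ n * sigma \<rho> \<phi> \<gamma>" if "\<gamma> \<in> irs n" for \<gamma> n
    using irs_wlen[OF that] by (simp add: f_def zc_def lam_def exp_of_nat_mult[symmetric] mult.commute)
  have fnn: "f \<gamma> \<ge> 0" if "\<gamma> \<in> A" for \<gamma>
    using that by (auto simp: f_def A_def irb_eq irs_def bridge_def intro!: mult_nonneg_nonneg sigma_walk_nonneg)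
  have finU: "finite (Ub N)" for N unfolding Ub_def using finite_irs by auto
  have UA: "Ub N \<subseteq> A" for N unfolding Ub_def A_def irb_eq by auto
  have sumU: "sum f (Ub N) = IG zc N" for N
  proof -
    have "sum f (Ub N) = (\<Sum>n\<le>N. sum f (irs n))" unfolding Ub_def
      by (rule sum.UNION_disjoint) (auto simp: finite_irs dest: irs_wlen)
    also have "\<dots> = (\<Sum>n\<le>N. isum n * zc ^ n)"
      unfolding isum_def by (intro sum.cong refl) (simp add: fA sum_distrib_left sum_distrib_right mult.commute)
    finally show ?thesis by (simp add: IG_def)
  qed
  have "(sum f \<longlongrightarrow> 1) (finite_subsets_at_top A)"
  proof (rule order_tendstoI)
    fix a :: real assume a: "a < 1"
    obtain N where N: "IG zc N > a" using IG_approach[OF a] by blast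
    show "eventually (\<lambda>X. a < sum f X) (finite_subsets_at_top A)"
      unfolding eventually_finite_subsets_at_top
    proof (intro exI conjI allI impI)
      show "finite (Ub N)" "Ub N \<subseteq> A" by (rule finU, rule UA)
      fix Y assume Y: "finite Y \<and> Ub N \<subseteq> Y \<and> Y \<subseteq> A"
      have "sum f (Ub N) \<le> sum f Y" using Y fnn by (intro sum_mono2) auto
      then show "a < sum f Y" using N sumU by simp
    qed
  next
    fix a :: real assume a: "a > 1"
    show "eventually (\<lambda>X. sum f X < a) (finite_subsets_at_top A)"
    proof (rule eventually_finite_subsets_at_top_weakI)
      fix X assume X: "finite X" "X \<subseteq> A"
      define N where "N = Max (wlen ` X \<union> {0})"
      have "X \<subseteq> Ub N"
      proof
        fix \<gamma> assume g: "\<gamma> \<in> X"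
        then have "\<gamma> \<in> irs (wlen \<gamma>)" using X by (auto simp: A_def irb_eq dest: irs_wlen)
        moreover have "wlen \<gamma> \<le> N" unfolding N_def using X g by (intro Max_ge) auto
        ultimately show "\<gamma> \<in> Ub N" by (auto simp: Ub_def)
      qed
      then have "sum f X \<le> sum f (Ub N)" using finU UA fnn by (intro sum_mono2) blast+
      also have "\<dots> \<le> 1" using sumU IG_le1 by simp
      finally show "sum f X < a" using a by simp
    qed
  qed
  then show ?thesis unfolding has_sum_def f_def A_def .
qed

end

theorem theorem6:
  fixes d :: nat and \<Omega> :: "pt set" and \<rho> :: "pt \<Rightarrow> real" and \<phi> :: "nat \<Rightarrow> real"
  assumes "d \<ge> 1"
    and "finite \<Omega>" and "\<forall>v\<in>\<Omega>. in_Zd d v" and "origin \<notin> \<Omega>"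
    and "\<forall>g. sym_Zd d g \<longrightarrow> g ` \<Omega> = \<Omega>"
    and "\<forall>a. \<phi> a \<ge> 0" and "\<phi> 0 = 0" and "\<phi> 1 = 0"
    and "\<forall>a b. \<phi> (a + b) \<ge> \<phi> a + \<phi> b"
    and "\<forall>v\<in>\<Omega>. \<rho> v \<ge> 0" and "(\<Sum>v\<in>\<Omega>. \<rho> v) = 1"
    and "\<forall>g. sym_Zd d g \<longrightarrow> (\<forall>v\<in>\<Omega>. \<rho> (g v) = \<rho> v)"
  shows "((\<lambda>\<gamma>. exp (- lambda0 \<Omega> \<rho> \<phi> * real (wlen \<gamma>)) * sigma \<rho> \<phi> \<gamma>)
            has_sum 1) (irreducible_bridges \<Omega>)"
proof -
  have "poly d \<Omega> \<rho> \<phi>" unfolding poly_def using assms by blast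
  then show ?thesis by (rule poly.main_has_sum)
qed

end
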